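(* Let $q\ge 2$ and let $F_q(x,y)=1-e^x-e^y+\big(1-x-y-(q-2)xy+xe^{(q-2)y}+ye^{(q-2)x}\big)e^{x+y}$. Then, as formal power series in $x$, $$\sum_{n=0}^{\infty}B_n(q)\frac{x^n}{n!}=\frac{\big(1+(q-2)x\big)e^{2x}}{1-F_q(x,x)}.$$
   Context: A $q$-ary matrix has entries in $\{0,1,\ldots,q-1\}$; a $q$-ary $m\times n$ matrix is a strong lonesum matrix if no other $q$-ary $m\times n$ matrix has the same row sums and column sums. $B_n(q)$ denotes the number of symmetric ($M=M^T$) $q$-ary strong lonesum $n\times n$ matrices, with $B_0(q)=1$. *)

theory Defs
  imports "HOL-Computational_Algebra.Formal_Power_Series"
begin

text \<open>An m x n matrix is represented as a function nat => nat => nat which is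
  zero outside the index range {0..<m} x {0..<n}.  It is q-ary if its entries
  lie in {0,...,q-1}.\<close>
definition qary_matrix :: "nat \<Rightarrow> nat \<Rightarrow> nat \<Rightarrow> (nat \<Rightarrow> nat \<Rightarrow> nat) \<Rightarrow> bool" where
  "qary_matrix q m n M \<longleftrightarrow>
     (\<forall>i j. (i < m \<and> j < n \<longrightarrow> M i j < q) \<and> (\<not> (i < m \<and> j < n) \<longrightarrow> M i j = 0))"

definition row_sum :: "nat \<Rightarrow> (nat \<Rightarrow> nat \<Rightarrow> nat) \<Rightarrow> nat \<Rightarrow> nat" where
  "row_sum n M i = (\<Sum>j<n. M i j)"

definition col_sum :: "nat \<Rightarrow> (nat \<Rightarrow> nat \<Rightarrow> nat) \<Rightarrow> nat \<Rightarrow> nat" where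
  "col_sum m M j = (\<Sum>i<m. M i j)"

definition strong_lonesum :: "nat \<Rightarrow> nat \<Rightarrow> nat \<Rightarrow> (nat \<Rightarrow> nat \<Rightarrow> nat) \<Rightarrow> bool" where
  "strong_lonesum q m n M \<longleftrightarrow> qary_matrix q m n M \<and>
     (\<forall>M'. qary_matrix q m n M' \<and> (\<forall>i<m. row_sum n M' i = row_sum n M i)
           \<and> (\<forall>j<n. col_sum m M' j = col_sum m M j) \<longrightarrow> M' = M)"

definition B :: "nat \<Rightarrow> nat \<Rightarrow> nat" where
  "B n q = card {M. strong_lonesum q n n M \<and> (\<forall>i j. M i j = M j i)}"

text \<open>F_q(x,y) for formal power series x, y (with zero constant term), e^{c z}
  being the composition of the series fps_exp c with z.\<close>
definition Fq :: "nat \<Rightarrow> real fps \<Rightarrow> real fps \<Rightarrow> real fps" where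
  "Fq q x y = 1 - (fps_exp 1 oo x) - (fps_exp 1 oo y)
     + (1 - x - y - (of_nat q - 2) * x * y + x * (fps_exp (of_nat q - 2) oo y)
        + y * (fps_exp (of_nat q - 2) oo x)) * (fps_exp 1 oo (x + y))"

end

theory Submission
  imports Defs "HOL-Library.FuncSet"
begin

unbundle fps_syntax

definition NC :: "nat \<Rightarrow> nat set \<Rightarrow> (nat \<Rightarrow> nat \<Rightarrow> nat) \<Rightarrow> bool" where
  "NC q I M \<longleftrightarrow> (\<forall>i\<in>I. \<forall>i'\<in>I. \<forall>j\<in>I. \<forall>j'\<in>I. i \<noteq> i' \<longrightarrow> j \<noteq> j' \<longrightarrow>
      0 < M i j \<longrightarrow> 0 < M i' j' \<longrightarrow> M i j' < q - 1 \<longrightarrow> \<not> M i' j < q - 1)"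

lemma NC_E:
  assumes "NC q I M" "i \<in> I" "i' \<in> I" "j \<in> I" "j' \<in> I" "i \<noteq> i'" "j \<noteq> j'"
    "0 < M i j" "0 < M i' j'" "M i j' < q - 1" "M i' j < q - 1"
  shows False
  using assms unfolding NC_def by blast

lemma chain_False:
  assumes NC: "NC q I M" and q: "q \<ge> 2"
  shows "\<lbrakk> a < b; r b = r a;
     \<forall>t. a \<le> t \<and> t < b \<longrightarrow> r t \<in> I \<and> c t \<in> I \<and> 0 < M (r t) (c t) \<and> M (r (Suc t)) (c t) < q - 1 \<and> r t \<noteq> r (Suc t);
     \<forall>t. a \<le> t \<and> Suc t < b \<longrightarrow> c t \<noteq> c (Suc t);
     c (b - 1) \<noteq> c a \<rbrakk> \<Longrightarrow> False"
proof (induction "b - a" arbitrary: a r rule: less_induct)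
  case less
  note H = less.prems(3)[rule_format]
  note HC = less.prems(4)[rule_format]
  show False
  proof (cases "b = Suc a")
    case True
    then show False using H[of a] less.prems(2) by auto
  next
    case False
    with less.prems(1) have ab: "Suc a < b" by auto
    show False
    proof (cases "b = Suc (Suc a)")
      case True
      show False
        using NC_E[OF NC, of "r a" "r (Suc a)" "c a" "c (Suc a)"] H[of a] H[of "Suc a"] HC[of a]
          less.prems(2) True by auto
    next
      case False
      with ab have ab2: "Suc (Suc a) < b" by auto
      show False
      proof (cases "M (r a) (c (Suc a)) < q - 1")
        case True
        show False
          using NC_E[OF NC, of "r a" "r (Suc a)" "c a" "c (Suc a)"] H[of a] H[of "Suc a"] HC[of a]
            True ab by auto
      next
        case False
        hence geV: "M (r a) (c (Suc a)) \<ge> q - 1" by simp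
        define r' where "r' = r(Suc a := r a)"
        show False
        proof (rule less.hyps[of "Suc a" r'])
          show "b - Suc a < b - a" using ab by auto
          show "Suc a < b" using ab .
          show "r' b = r' (Suc a)" using ab less.prems(2) by (auto simp: r'_def)
          show "\<forall>t. Suc a \<le> t \<and> t < b \<longrightarrow> r' t \<in> I \<and> c t \<in> I \<and> 0 < M (r' t) (c t) \<and>
                 M (r' (Suc t)) (c t) < q - 1 \<and> r' t \<noteq> r' (Suc t)"
          proof (intro allI impI)
            fix t assume t: "Suc a \<le> t \<and> t < b"
            show "r' t \<in> I \<and> c t \<in> I \<and> 0 < M (r' t) (c t) \<and>
                 M (r' (Suc t)) (c t) < q - 1 \<and> r' t \<noteq> r' (Suc t)"
            proof (cases "t = Suc a")
              case True
              have "r (Suc (Suc a)) \<noteq> r a" using H[of "Suc a"] geV ab by auto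
              then show ?thesis using True H[of a] H[of "Suc a"] geV q ab
                by (auto simp: r'_def)
            next
              case False
              then show ?thesis using t H[of t] by (auto simp: r'_def)
            qed
          qed
          show "\<forall>t. Suc a \<le> t \<and> Suc t < b \<longrightarrow> c t \<noteq> c (Suc t)" using HC by auto
          show "c (b - 1) \<noteq> c (Suc a)"
          proof
            assume e: "c (b - 1) = c (Suc a)"
            have "M (r b) (c (b - 1)) < q - 1" using H[of "b - 1"] ab by auto
            with e less.prems(2) geV show False by auto
          qed
        qed
      qed
    qed
  qed
qed

lemma qary_bound: "qary_matrix q m n M \<Longrightarrow> M i j < q \<or> M i j = 0"
  unfolding qary_matrix_def by metis

lemma NC_imp_unique:
  assumes q: "q \<ge> 2" and NC: "NC q {..<n} M" and qM: "qary_matrix q n n M" and qM': "qary_matrix q n n M'"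
    and rs: "\<forall>i<n. row_sum n M' i = row_sum n M i" and cs: "\<forall>j<n. col_sum n M' j = col_sum n M j"
    and ne: "M' \<noteq> M"
  shows False
proof -
  define D where "D a b = int (M' a b) - int (M a b)" for a b
  have rowD: "(\<Sum>b<n. D a b) = 0" if "a < n" for a
    using rs that by (simp add: D_def sum_subtractf row_sum_def flip: of_nat_sum)
  have colD: "(\<Sum>a<n. D a b) = 0" if "b < n" for b
    using cs that by (simp add: D_def sum_subtractf col_sum_def flip: of_nat_sum)
  have negex: "\<exists>b<n. D a b < 0" if "a < n" "b0 < n" "D a b0 > 0" for a b0
  proof (rule ccontr)
    assume "\<not> ?thesis"
    hence "\<forall>b\<in>{..<n}. D a b \<ge> 0" by auto
    moreover have "b0 \<in> {..<n}" using that by auto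
    ultimately have "(\<Sum>b<n. D a b) > 0"
      using that by (intro sum_pos2[of "{..<n}" b0]) auto
    with rowD[OF that(1)] show False by simp
  qed
  have posex: "\<exists>a<n. D a b > 0" if "b < n" "a0 < n" "D a0 b < 0" for b a0
  proof (rule ccontr)
    assume "\<not> ?thesis"
    hence "\<forall>a\<in>{..<n}. D a b \<le> 0" by auto
    moreover have "a0 \<in> {..<n}" using that by auto
    ultimately have "(\<Sum>a<n. - D a b) > 0"
      using that by (intro sum_pos2[of "{..<n}" a0]) auto
    with colD[OF that(1)] show False by (simp add: sum_negf)
  qed
  obtain a0 b0 where ab0: "M' a0 b0 \<noteq> M a0 b0" using ne by (meson ext)
  have a0n: "a0 < n" "b0 < n"
    using ab0 qM qM' unfolding qary_matrix_def by metis+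
  have "\<exists>r0<n. \<exists>b<n. D r0 b < 0"
  proof (cases "D a0 b0 < 0")
    case True then show ?thesis using a0n by auto
  next
    case False
    with ab0 have "D a0 b0 > 0" by (auto simp: D_def)
    then show ?thesis using negex[of a0 b0] a0n by auto
  qed
  then obtain r0 where r0: "r0 < n" "\<exists>b<n. D r0 b < 0" by auto
  define P where "P r \<longleftrightarrow> r < n \<and> (\<exists>b<n. D r b < 0)" for r
  define col where "col r = (SOME b. b < n \<and> D r b < 0)" for r
  define nxt where "nxt r = (SOME r'. r' < n \<and> D r' (col r) > 0)" for r
  have colP: "col r < n \<and> D r (col r) < 0" if "P r" for r
    using that unfolding P_def col_def by (metis (mono_tags, lifting) someI_ex)
  have nxtP: "nxt r < n \<and> D (nxt r) (col r) > 0" if "P r" for r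
  proof -
    have "\<exists>r'. r' < n \<and> D r' (col r) > 0"
      using posex[of "col r" r] colP[OF that] that unfolding P_def by auto
    then show ?thesis unfolding nxt_def by (metis (mono_tags, lifting) someI_ex)
  qed
  have nxtP2: "P (nxt r)" if "P r" for r
    using nxtP[OF that] colP[OF that] negex[of "nxt r" "col r"] unfolding P_def by auto
  define r where "r t = (nxt ^^ t) r0" for t
  have Pr: "P (r t)" for t
  proof (induction t)
    case 0 show ?case using r0 by (simp add: r_def P_def)
  next
    case (Suc t) thus ?case using nxtP2 by (simp add: r_def)
  qed
  have rSuc: "r (Suc t) = nxt (r t)" for t by (simp add: r_def)
  have "\<not> inj_on r {..n}"
  proof
    assume "inj_on r {..n}"
    hence "card (r ` {..n}) = Suc n" by (simp add: card_image)
    moreover have "r ` {..n} \<subseteq> {..<n}" using Pr by (auto simp: P_def)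
    ultimately show False using card_mono[of "{..<n}" "r ` {..n}"] by auto
  qed
  then obtain a b where ab: "a \<le> n" "b \<le> n" "a \<noteq> b" "r a = r b"
    unfolding inj_on_def by auto
  then obtain a b where ab: "a < b" "r a = r b"
    by (metis linorder_neqE_nat)
  define c where "c t = col (r t)" for t
  have MV: "M x y \<le> q - 1" for x y using qM unfolding qary_matrix_def by (metis less_Suc_eq_le Suc_pred' q le_trans less_imp_le_nat pos2 zero_less_iff_neq_zero not_less_eq_eq)
  have MV': "M' x y \<le> q - 1" for x y using qM' unfolding qary_matrix_def by (metis less_Suc_eq_le Suc_pred' q le_trans less_imp_le_nat pos2 zero_less_iff_neq_zero not_less_eq_eq)
  show False
  proof (rule chain_False[OF NC q ab(1), of r c])
    show "r b = r a" using ab by simp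
    show "\<forall>t. a \<le> t \<and> t < b \<longrightarrow> r t \<in> {..<n} \<and> c t \<in> {..<n} \<and> 0 < M (r t) (c t) \<and>
       M (r (Suc t)) (c t) < q - 1 \<and> r t \<noteq> r (Suc t)"
    proof (intro allI impI)
      fix t
      have 1: "col (r t) < n \<and> D (r t) (col (r t)) < 0" using colP[OF Pr] .
      have 2: "D (r (Suc t)) (col (r t)) > 0" using nxtP[OF Pr] rSuc by simp
      have 3: "r t < n" using Pr[of t] by (simp add: P_def)
      show "r t \<in> {..<n} \<and> c t \<in> {..<n} \<and> 0 < M (r t) (c t) \<and>
        M (r (Suc t)) (c t) < q - 1 \<and> r t \<noteq> r (Suc t)"
        using 1 2 3 MV'[of "r (Suc t)" "col (r t)"] unfolding c_def D_def by auto
    qed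
    show "\<forall>t. a \<le> t \<and> Suc t < b \<longrightarrow> c t \<noteq> c (Suc t)"
    proof (intro allI impI notI)
      fix t assume "c t = c (Suc t)"
      have 1: "D (r (Suc t)) (col (r (Suc t))) < 0" using colP[OF Pr] by blast
      have 2: "D (r (Suc t)) (col (r t)) > 0" using nxtP[OF Pr] rSuc by simp
      show False using 1 2 \<open>c t = c (Suc t)\<close> by (simp add: c_def)
    qed
    show "c (b - 1) \<noteq> c a"
    proof
      assume e: "c (b - 1) = c a"
      have 1: "D (r a) (col (r a)) < 0" using colP[OF Pr] by blast
      have 2: "D (r (Suc (b - 1))) (col (r (b - 1))) > 0" using nxtP[OF Pr] rSuc by simp
      have "Suc (b - 1) = b" using ab by auto
      with 1 2 e ab show False by (simp add: c_def)
    qed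
  qed
qed

lemma unique_imp_NC:
  assumes q: "q \<ge> 2" and qM: "qary_matrix q n n M"
    and uniq: "\<forall>M'. qary_matrix q n n M' \<and> (\<forall>i<n. row_sum n M' i = row_sum n M i)
           \<and> (\<forall>j<n. col_sum n M' j = col_sum n M j) \<longrightarrow> M' = M"
  shows "NC q {..<n} M"
  unfolding NC_def
proof (intro ballI impI notI)
  fix i i' j j' assume mem: "i \<in> {..<n}" "i' \<in> {..<n}" "j \<in> {..<n}" "j' \<in> {..<n}"
    and d: "i \<noteq> i'" "j \<noteq> j'" and c: "0 < M i j" "0 < M i' j'" "M i j' < q - 1" "M i' j < q - 1"
  define d where "d a b = (of_bool (a = i \<and> b = j') + of_bool (a = i' \<and> b = j)
     - of_bool (a = i \<and> b = j) - of_bool (a = i' \<and> b = j') :: int)" for a b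
  define M' where "M' a b = nat (int (M a b) + d a b)" for a b
  have dge: "int (M a b) + d a b \<ge> 0" for a b
    using c d by (auto simp: d_def)
  have M'int: "int (M' a b) = int (M a b) + d a b" for a b
    using dge[of a b] by (simp add: M'_def)
  have qM': "qary_matrix q n n M'"
    unfolding qary_matrix_def
  proof (intro allI conjI impI)
    fix a b
    assume ab: "a < n \<and> b < n"
    have "M a b < q" using qM ab unfolding qary_matrix_def by blast
    hence "int (M a b) + d a b < int q" using c d by (auto simp: d_def)
    then show "M' a b < q" using M'int[of a b] by linarith
  next
    fix a b
    show "\<not> (a < n \<and> b < n) \<Longrightarrow> M' a b = 0"
      using qM mem unfolding qary_matrix_def M'_def d_def by auto
  qed
  have ob: "(\<Sum>b<n. (of_bool (b = x) :: int)) = 1" if "x < n" for x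
    using that by (simp add: of_bool_def sum.delta)
  have d1: "d a b = of_bool (a = i) * (of_bool (b = j') - of_bool (b = j)) + of_bool (a = i') * (of_bool (b = j) - of_bool (b = j'))" for a b
    by (simp add: d_def of_bool_def)
  have d2: "d a b = of_bool (b = j') * (of_bool (a = i) - of_bool (a = i')) + of_bool (b = j) * (of_bool (a = i') - of_bool (a = i))" for a b
    by (simp add: d_def of_bool_def)
  have rsd: "(\<Sum>b<n. d a b) = 0" for a
    using mem unfolding d1 by (simp add: sum.distrib sum_subtractf ob flip: sum_distrib_left)
  have csd: "(\<Sum>a<n. d a b) = 0" for b
    using mem unfolding d2 by (simp add: sum.distrib sum_subtractf ob flip: sum_distrib_left)
  have "M' = M"
  proof (rule uniq[rule_format], intro conjI allI impI)
    show "qary_matrix q n n M'" by fact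
    fix a
    have "(\<Sum>b<n. int (M' a b)) = (\<Sum>b<n. int (M a b))"
      by (simp add: M'int sum.distrib rsd)
    then show "row_sum n M' a = row_sum n M a" unfolding row_sum_def by (simp only: flip: of_nat_sum)
  next
    fix b
    have "(\<Sum>a<n. int (M' a b)) = (\<Sum>a<n. int (M a b))"
      by (simp add: M'int sum.distrib csd)
    then show "col_sum n M' b = col_sum n M b" unfolding col_sum_def by (simp only: flip: of_nat_sum)
  qed
  moreover have "M' i j \<noteq> M i j"
    using M'int[of i j] d by (auto simp: d_def)
  ultimately show False by simp
qed

lemma lonesum_iff_NC:
  assumes q: "q \<ge> 2" and qM: "qary_matrix q n n M"
  shows "strong_lonesum q n n M \<longleftrightarrow> NC q {..<n} M"
proof
  assume "strong_lonesum q n n M"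
  then show "NC q {..<n} M" using unique_imp_NC[OF q qM] unfolding strong_lonesum_def by blast
next
  assume "NC q {..<n} M"
  then show "strong_lonesum q n n M"
    using NC_imp_unique[OF q _ qM] qM unfolding strong_lonesum_def by blast
qed


definition qs :: "nat \<Rightarrow> nat set \<Rightarrow> (nat \<Rightarrow> nat \<Rightarrow> nat) \<Rightarrow> bool" where
  "qs q I M \<longleftrightarrow> (\<forall>i j. (i \<in> I \<and> j \<in> I \<longrightarrow> M i j < q) \<and> (\<not> (i \<in> I \<and> j \<in> I) \<longrightarrow> M i j = 0) \<and> M i j = M j i)"

definition SN :: "nat \<Rightarrow> nat set \<Rightarrow> (nat \<Rightarrow> nat \<Rightarrow> nat) set" where
  "SN q I = {M. qs q I M \<and> NC q I M}"

definition zr :: "nat set \<Rightarrow> (nat \<Rightarrow> nat \<Rightarrow> nat) \<Rightarrow> nat \<Rightarrow> bool" where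
  "zr I M i \<longleftrightarrow> (\<forall>j\<in>I. M i j = 0)"

definition fr :: "nat \<Rightarrow> nat set \<Rightarrow> (nat \<Rightarrow> nat \<Rightarrow> nat) \<Rightarrow> nat \<Rightarrow> bool" where
  "fr q I M i \<longleftrightarrow> (\<forall>j\<in>I. M i j = q - 1)"

definition N0 :: "nat \<Rightarrow> nat set \<Rightarrow> (nat \<Rightarrow> nat \<Rightarrow> nat) set" where
  "N0 q I = {M \<in> SN q I. \<forall>i\<in>I. \<not> zr I M i}"

definition ZS :: "nat \<Rightarrow> nat set \<Rightarrow> (nat \<Rightarrow> nat \<Rightarrow> nat) set" where
  "ZS q I = {M \<in> SN q I. \<exists>i\<in>I. zr I M i}"

definition FS :: "nat \<Rightarrow> nat set \<Rightarrow> (nat \<Rightarrow> nat \<Rightarrow> nat) set" where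
  "FS q I = {M \<in> SN q I. \<exists>i\<in>I. fr q I M i}"

definition Prim :: "nat \<Rightarrow> nat set \<Rightarrow> (nat \<Rightarrow> nat \<Rightarrow> nat) set" where
  "Prim q I = {M \<in> SN q I. \<forall>i\<in>I. \<not> zr I M i \<and> \<not> fr q I M i}"

definition cpl :: "nat \<Rightarrow> nat set \<Rightarrow> (nat \<Rightarrow> nat \<Rightarrow> nat) \<Rightarrow> (nat \<Rightarrow> nat \<Rightarrow> nat)" where
  "cpl q I M = (\<lambda>a b. if a \<in> I \<and> b \<in> I then q - 1 - M a b else 0)"

lemma finite_SN:
  assumes "finite I" shows "finite (SN q I)"
proof -
  let ?F = "(\<lambda>f a b. if a \<in> I \<and> b \<in> I then f (a, b) else 0) ` (PiE (I \<times> I) (\<lambda>_. {..<q}))"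
  have "finite ?F" using assms by (intro finite_imageI finite_PiE) auto
  moreover have "SN q I \<subseteq> ?F"
  proof
    fix M assume "M \<in> SN q I"
    hence qM: "qs q I M" by (simp add: SN_def)
    let ?f = "restrict (\<lambda>(a, b). M a b) (I \<times> I)"
    have "?f \<in> PiE (I \<times> I) (\<lambda>_. {..<q})" using qM by (auto simp: qs_def)
    moreover have "M = (\<lambda>a b. if a \<in> I \<and> b \<in> I then ?f (a, b) else 0)"
      using qM by (auto simp: qs_def fun_eq_iff)
    ultimately show "M \<in> ?F" by blast
  qed
  ultimately show ?thesis by (rule finite_subset[rotated])
qed

lemma qs_lt: "qs q I M \<Longrightarrow> i \<in> I \<Longrightarrow> j \<in> I \<Longrightarrow> M i j < q"
  unfolding qs_def by blast
lemma qs_out: "qs q I M \<Longrightarrow> \<not> (i \<in> I \<and> j \<in> I) \<Longrightarrow> M i j = 0"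
  unfolding qs_def by blast
lemma qs_sym: "qs q I M \<Longrightarrow> M i j = M j i"
  unfolding qs_def by blast
lemma qsI: "(\<And>i j. i \<in> I \<Longrightarrow> j \<in> I \<Longrightarrow> M i j < q) \<Longrightarrow> (\<And>i j. \<not> (i \<in> I \<and> j \<in> I) \<Longrightarrow> M i j = 0)
  \<Longrightarrow> (\<And>i j. M i j = M j i) \<Longrightarrow> qs q I M"
  unfolding qs_def by blast

lemma NC_mono: "NC q I M \<Longrightarrow> J \<subseteq> I \<Longrightarrow> NC q J M"
  unfolding NC_def by blast

lemma zeroset_eq:
  assumes Z: "Z \<subseteq> I" and q0: "q > 0"
  shows "{M \<in> SN q I. {i \<in> I. zr I M i} = Z} = N0 q (I - Z)"
proof (intro equalityI subsetI)
  fix M assume "M \<in> {M \<in> SN q I. {i \<in> I. zr I M i} = Z}"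
  hence M: "qs q I M" "NC q I M" and zs: "{i \<in> I. zr I M i} = Z" by (auto simp: SN_def)
  have z1: "M i j = 0" if "i \<in> Z" for i j
  proof (cases "j \<in> I")
    case True then show ?thesis using that zs by (auto simp: zr_def)
  next
    case False then show ?thesis using qs_out[OF M(1)] by blast
  qed
  have z2: "M i j = 0" if "j \<in> Z" for i j
    using z1[OF that, of i] qs_sym[OF M(1)] by simp
  have "qs q (I - Z) M"
  proof (rule qsI)
    show "M i j < q" if "i \<in> I - Z" "j \<in> I - Z" for i j using qs_lt[OF M(1)] that by blast
    show "M i j = 0" if "\<not> (i \<in> I - Z \<and> j \<in> I - Z)" for i j
      using that z1 z2 qs_out[OF M(1)] by blast
    show "M i j = M j i" for i j using qs_sym[OF M(1)] .
  qed
  moreover have "NC q (I - Z) M" using NC_mono[OF M(2)] by blast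
  moreover have "\<not> zr (I - Z) M i" if "i \<in> I - Z" for i
  proof
    assume "zr (I - Z) M i"
    hence "zr I M i" using z2 by (auto simp: zr_def)
    with that zs show False by auto
  qed
  ultimately show "M \<in> N0 q (I - Z)" by (auto simp: N0_def SN_def)
next
  fix M assume "M \<in> N0 q (I - Z)"
  hence M: "qs q (I - Z) M" "NC q (I - Z) M" and nz: "\<forall>i\<in>I - Z. \<not> zr (I - Z) M i"
    by (auto simp: N0_def SN_def)
  have out: "M i j = 0" if "\<not> (i \<in> I - Z \<and> j \<in> I - Z)" for i j
    using qs_out[OF M(1)] that by blast
  have "qs q I M"
  proof (rule qsI)
    show "M i j < q" if "i \<in> I" "j \<in> I" for i j
      using qs_lt[OF M(1)] out[of i j] that q0 by (cases "i \<in> I - Z \<and> j \<in> I - Z") auto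
    show "M i j = 0" if "\<not> (i \<in> I \<and> j \<in> I)" for i j using that out by blast
    show "M i j = M j i" for i j using qs_sym[OF M(1)] .
  qed
  moreover have "NC q I M"
    unfolding NC_def
  proof (intro ballI impI notI)
    fix i i' j j' assume *: "i \<in> I" "i' \<in> I" "j \<in> I" "j' \<in> I" "i \<noteq> i'" "j \<noteq> j'"
      "0 < M i j" "0 < M i' j'" "M i j' < q - 1" "M i' j < q - 1"
    have "i \<in> I - Z \<and> j \<in> I - Z" using *(7) out[of i j] by (cases "i \<in> I - Z \<and> j \<in> I - Z") auto
    moreover have "i' \<in> I - Z \<and> j' \<in> I - Z" using *(8) out[of i' j'] by (cases "i' \<in> I - Z \<and> j' \<in> I - Z") auto
    ultimately show False using NC_E[OF M(2), of i i' j j'] * by blast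
  qed
  moreover have "{i \<in> I. zr I M i} = Z"
  proof (intro equalityI subsetI)
    fix i assume "i \<in> {i \<in> I. zr I M i}"
    hence "i \<in> I" "zr I M i" by auto
    moreover have "zr (I - Z) M i" using \<open>zr I M i\<close> by (auto simp: zr_def)
    ultimately show "i \<in> Z" using nz by auto
  next
    fix i assume "i \<in> Z"
    then show "i \<in> {i \<in> I. zr I M i}" using Z out by (auto simp: zr_def)
  qed
  ultimately show "M \<in> {M \<in> SN q I. {i \<in> I. zr I M i} = Z}" by (auto simp: SN_def)
qed

lemma card_SN_group:
  assumes "finite I" "q > 0"
  shows "card {M \<in> SN q I. P {i \<in> I. zr I M i}} = (\<Sum>Z\<in>{Z. Z \<subseteq> I \<and> P Z}. card (N0 q (I - Z)))"
proof -
  have "{M \<in> SN q I. P {i \<in> I. zr I M i}} = (\<Union>Z\<in>{Z. Z \<subseteq> I \<and> P Z}. {M \<in> SN q I. {i \<in> I. zr I M i} = Z})"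
    by auto
  also have "card \<dots> = (\<Sum>Z\<in>{Z. Z \<subseteq> I \<and> P Z}. card {M \<in> SN q I. {i \<in> I. zr I M i} = Z})"
    using assms finite_SN[OF assms(1), of q]
    by (intro card_UN_disjoint) (auto simp: finite_subset)
  also have "\<dots> = (\<Sum>Z\<in>{Z. Z \<subseteq> I \<and> P Z}. card (N0 q (I - Z)))"
    by (intro sum.cong refl) (simp add: zeroset_eq assms)
  finally show ?thesis .
qed

lemma card_ZS:
  assumes "finite I" "q > 0"
  shows "card (ZS q I) = (\<Sum>Z\<in>{Z. Z \<subseteq> I \<and> Z \<noteq> {}}. card (N0 q (I - Z)))"
proof -
  have "ZS q I = {M \<in> SN q I. {i \<in> I. zr I M i} \<noteq> {}}" by (auto simp: ZS_def)
  then show ?thesis using card_SN_group[OF assms, of "\<lambda>Z. Z \<noteq> {}"] by simp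
qed

lemma cpl_SN:
  assumes M: "M \<in> SN q I" shows "cpl q I M \<in> SN q I"
proof -
  have qM: "qs q I M" and nc: "NC q I M" using M by (auto simp: SN_def)
  have "qs q I (cpl q I M)"
  proof (rule qsI)
    show "cpl q I M i j < q" if "i \<in> I" "j \<in> I" for i j
      using that qs_lt[OF qM, of i j] by (simp add: cpl_def)
    show "cpl q I M i j = 0" if "\<not> (i \<in> I \<and> j \<in> I)" for i j using that unfolding cpl_def by auto
    show "cpl q I M i j = cpl q I M j i" for i j using qs_sym[OF qM, of i j] by (auto simp: cpl_def)
  qed
  moreover have "NC q I (cpl q I M)"
    unfolding NC_def
  proof (intro ballI impI notI)
    fix i i' j j' assume *: "i \<in> I" "i' \<in> I" "j \<in> I" "j' \<in> I" "i \<noteq> i'" "j \<noteq> j'"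
      "0 < cpl q I M i j" "0 < cpl q I M i' j'" "cpl q I M i j' < q - 1" "cpl q I M i' j < q - 1"
    have "0 < M i j'" "0 < M i' j" "M i j < q - 1" "M i' j' < q - 1"
      using * unfolding cpl_def by auto
    then show False
      using NC_E[OF nc, of i i' j' j] * by auto
  qed
  ultimately show ?thesis by (simp add: SN_def)
qed

lemma cpl_cpl:
  assumes M: "M \<in> SN q I" shows "cpl q I (cpl q I M) = M"
proof -
  have qM: "qs q I M" using M by (auto simp: SN_def)
  show ?thesis
  proof (intro ext)
    fix a b
    show "cpl q I (cpl q I M) a b = M a b"
      using qs_lt[OF qM, of a b] qs_out[OF qM, of a b] by (auto simp: cpl_def)
  qed
qed

lemma cpl_zr:
  assumes M: "M \<in> SN q I" and i: "i \<in> I" shows "zr I (cpl q I M) i \<longleftrightarrow> fr q I M i"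
proof -
  have qM: "qs q I M" using M by (auto simp: SN_def)
  have "(cpl q I M i j = 0) \<longleftrightarrow> M i j = q - 1" if "j \<in> I" for j
    using qs_lt[OF qM i that] i that by (auto simp: cpl_def)
  then show ?thesis by (auto simp: zr_def fr_def)
qed

lemma cpl_fr:
  assumes M: "M \<in> SN q I" and i: "i \<in> I" shows "fr q I (cpl q I M) i \<longleftrightarrow> zr I M i"
  using cpl_zr[OF cpl_SN[OF M] i] cpl_cpl[OF M] by simp

lemma cpl_inj: "inj_on (cpl q I) (SN q I)"
proof (rule inj_onI)
  fix x y assume "x \<in> SN q I" "y \<in> SN q I" "cpl q I x = cpl q I y"
  then have "cpl q I (cpl q I x) = cpl q I (cpl q I y)" by simp
  then show "x = y" using cpl_cpl[of x q I] cpl_cpl[of y q I] \<open>x \<in> SN q I\<close> \<open>y \<in> SN q I\<close> by simp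
qed

lemma cpl_ZS: "cpl q I ` ZS q I = FS q I"
proof (intro equalityI subsetI)
  fix M assume "M \<in> cpl q I ` ZS q I"
  then obtain M0 where M0: "M0 \<in> ZS q I" "M = cpl q I M0" by auto
  then have S: "M0 \<in> SN q I" by (simp add: ZS_def)
  from M0 obtain i where i: "i \<in> I" "zr I M0 i" by (auto simp: ZS_def)
  have "fr q I M i" using cpl_fr[OF S i(1)] i M0 by simp
  then show "M \<in> FS q I" using cpl_SN[OF S] M0 i unfolding FS_def by blast
next
  fix M assume M: "M \<in> FS q I"
  hence "M \<in> SN q I" by (simp add: FS_def)
  from M obtain i where i: "i \<in> I" "fr q I M i" by (auto simp: FS_def)
  have "cpl q I M \<in> ZS q I" using cpl_SN[OF \<open>M \<in> SN q I\<close>] cpl_zr[OF \<open>M \<in> SN q I\<close> i(1)] i unfolding ZS_def by blast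
  moreover have "M = cpl q I (cpl q I M)" using cpl_cpl[OF \<open>M \<in> SN q I\<close>] by simp
  ultimately show "M \<in> cpl q I ` ZS q I" by blast
qed

lemma card_FS: "card (FS q I) = card (ZS q I)"
proof -
  have "inj_on (cpl q I) (ZS q I)" using cpl_inj by (rule inj_on_subset) (auto simp: ZS_def)
  then show ?thesis using card_image[of "cpl q I" "ZS q I"] cpl_ZS[of q I] by simp
qed

lemma SN_split:
  assumes q: "q \<ge> 2" and fin: "finite I"
  shows "card (SN q I) = card (Prim q I) + 2 * card (ZS q I)"
    "card (SN q I) = card (N0 q I) + card (ZS q I)"
proof -
  have fS: "finite (SN q I)" using finite_SN[OF fin] .
  have e1: "SN q I = Prim q I \<union> (ZS q I \<union> FS q I)"
    by (auto simp: Prim_def ZS_def FS_def)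
  have d1: "ZS q I \<inter> FS q I = {}"
  proof (rule ccontr)
    assume "ZS q I \<inter> FS q I \<noteq> {}"
    then obtain M i k where M: "M \<in> SN q I" "i \<in> I" "zr I M i" "k \<in> I" "fr q I M k"
      by (auto simp: ZS_def FS_def)
    have "M i k = 0" "M k i = q - 1" using M by (auto simp: zr_def fr_def)
    moreover have "M i k = M k i" using M(1) qs_sym by (auto simp: SN_def)
    ultimately show False using q by simp
  qed
  have d2: "Prim q I \<inter> (ZS q I \<union> FS q I) = {}"
    by (auto simp: Prim_def ZS_def FS_def)
  have "card (SN q I) = card (Prim q I) + card (ZS q I \<union> FS q I)"
    using e1 d2 fS card_Un_disjoint[of "Prim q I" "ZS q I \<union> FS q I"] by (simp add: finite_subset)
  also have "card (ZS q I \<union> FS q I) = card (ZS q I) + card (FS q I)"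
    using d1 fS e1 by (intro card_Un_disjoint) (auto intro: finite_subset)
  finally show "card (SN q I) = card (Prim q I) + 2 * card (ZS q I)" by (simp add: card_FS)
  have "SN q I = N0 q I \<union> ZS q I" "N0 q I \<inter> ZS q I = {}" by (auto simp: N0_def ZS_def)
  then show "card (SN q I) = card (N0 q I) + card (ZS q I)"
    using fS card_Un_disjoint[of "N0 q I" "ZS q I"] by (simp add: finite_subset)
qed


definition Jset :: "nat \<Rightarrow> nat set \<Rightarrow> (nat \<Rightarrow> nat \<Rightarrow> nat) \<Rightarrow> nat set" where
  "Jset q I M = {j \<in> I. \<forall>c\<in>I. M j c < q - 1}"

definition Kset :: "nat set \<Rightarrow> (nat \<Rightarrow> nat \<Rightarrow> nat) \<Rightarrow> nat set" where
  "Kset I M = {k \<in> I. \<forall>c\<in>I. 0 < M k c}"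

lemma SN_D: assumes "M \<in> SN q I" shows "qs q I M" "NC q I M"
  using assms by (auto simp: SN_def)

lemma rows_comparable:
  assumes M: "M \<in> SN q I" and i: "i \<in> I" and i': "i' \<in> I"
  shows "(\<forall>c\<in>I. M i c \<le> M i' c) \<or> (\<forall>c\<in>I. M i' c \<le> M i c)"
proof (rule ccontr)
  assume "\<not> ?thesis"
  then obtain a b where ab: "a \<in> I" "b \<in> I" "M i a > M i' a" "M i' b > M i b"
    by (auto simp: not_le)
  have lt: "M x y < q" if "x \<in> I" "y \<in> I" for x y using qs_lt[OF SN_D(1)[OF M] that] .
  have "a \<noteq> b" using ab by auto
  moreover have "i \<noteq> i'" using ab by auto
  moreover have "M i b < q - 1" using ab lt[OF i' ab(2)] by linarith
  moreover have "M i' a < q - 1" using ab lt[OF i ab(1)] by linarith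
  ultimately show False using NC_E[OF SN_D(2)[OF M] i i' ab(1) ab(2)] ab by auto
qed

lemma Prim_D: assumes "M \<in> Prim q I" shows "M \<in> SN q I" "\<And>i. i \<in> I \<Longrightarrow> \<not> zr I M i" "\<And>i. i \<in> I \<Longrightarrow> \<not> fr q I M i"
  using assms by (auto simp: Prim_def)

lemma Jset_ne:
  assumes M: "M \<in> Prim q I" and fin: "finite I" and ne: "I \<noteq> {}"
  shows "Jset q I M \<noteq> {}"
proof -
  have S: "M \<in> SN q I" using Prim_D[OF M] by simp
  define rs where "rs i = (\<Sum>c\<in>I. M i c)" for i
  have "Max (rs ` I) \<in> rs ` I" using fin ne by (intro Max_in) auto
  then obtain s where s1: "s \<in> I" "rs s = Max (rs ` I)" by auto
  have s: "s \<in> I" "\<forall>i\<in>I. rs i \<le> rs s"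
    using s1 fin by auto
  have "\<not> fr q I M s" using Prim_D(3)[OF M s(1)] .
  then obtain c where c: "c \<in> I" "M s c \<noteq> q - 1" by (auto simp: fr_def)
  have "M s c < q" using qs_lt[OF SN_D(1)[OF S] s(1) c(1)] .
  with c have sc: "M s c < q - 1" by linarith
  have "\<forall>i\<in>I. M c i < q - 1"
  proof
    fix i assume i: "i \<in> I"
    have "M i c \<le> M s c"
    proof (cases "\<forall>x\<in>I. M i x \<le> M s x")
      case True then show ?thesis using c by auto
    next
      case False
      then have le: "\<forall>x\<in>I. M s x \<le> M i x" using rows_comparable[OF S i s(1)] by auto
      have "rs s \<le> rs i" unfolding rs_def using le by (intro sum_mono) auto
      with s(2) i have "rs s = rs i" by (meson antisym)
      then have "M s c = M i c" using sum_mono_inv[of "M s" I "M i" c] le c fin unfolding rs_def by auto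
      then show ?thesis by simp
    qed
    then show "M c i < q - 1" using sc qs_sym[OF SN_D(1)[OF S], of i c] by simp
  qed
  then have "c \<in> Jset q I M" using c by (simp add: Jset_def)
  then show ?thesis by auto
qed

lemma Kset_cpl:
  assumes M: "M \<in> SN q I" and q: "q \<ge> 2"
  shows "Jset q I (cpl q I M) = Kset I M" "Kset I (cpl q I M) = Jset q I M"
proof -
  have lt: "M x y < q" if "x \<in> I" "y \<in> I" for x y using qs_lt[OF SN_D(1)[OF M] that] .
  show "Jset q I (cpl q I M) = Kset I M"
    unfolding Jset_def Kset_def cpl_def using lt q by auto
  show "Kset I (cpl q I M) = Jset q I M"
    unfolding Jset_def Kset_def cpl_def using lt q by auto
qed

lemma cpl_Prim:
  assumes M: "M \<in> Prim q I" shows "cpl q I M \<in> Prim q I"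
proof -
  have S: "M \<in> SN q I" using Prim_D[OF M] by simp
  show ?thesis unfolding Prim_def
    using cpl_SN[OF S] cpl_zr[OF S] cpl_fr[OF S] Prim_D[OF M] by auto
qed

lemma Kset_ne:
  assumes M: "M \<in> Prim q I" and fin: "finite I" and ne: "I \<noteq> {}" and q: "q \<ge> 2"
  shows "Kset I M \<noteq> {}"
  using Jset_ne[OF cpl_Prim[OF M] fin ne] Kset_cpl[OF Prim_D(1)[OF M] q] by simp

lemma row_two:
  assumes M: "M \<in> SN q I" and i: "i \<in> I" and nz: "\<not> zr I M i" and nf: "\<not> fr q I M i"
    and two: "x \<in> I" "y \<in> I" "x \<noteq> y"
  shows "\<exists>a\<in>I. \<exists>b\<in>I. a \<noteq> b \<and> 0 < M i b \<and> M i a < q - 1"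
proof -
  have lt: "M i y' < q" if "y' \<in> I" for y' using qs_lt[OF SN_D(1)[OF M] i that] .
  obtain b where b: "b \<in> I" "0 < M i b" using nz by (auto simp: zr_def)
  obtain a where a0: "a \<in> I" "M i a \<noteq> q - 1" using nf unfolding fr_def by blast
  have a: "a \<in> I" "M i a < q - 1" using a0 lt[OF a0(1)] by auto
  show ?thesis
  proof (cases "a = b")
    case False then show ?thesis using a b by (intro bexI[of _ a] bexI[of _ b]) auto
  next
    case True
    have "\<exists>c. c \<in> I \<and> c \<noteq> a" using two by (cases "x = a") auto
    then obtain c where c: "c \<in> I" "c \<noteq> a" by blast
    show ?thesis
    proof (cases "0 < M i c")
      case True then show ?thesis using c a by (intro bexI[of _ a] bexI[of _ c]) auto
    next
      case False
      then have "M i c < q - 1" using a by linarith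
      then show ?thesis using c b \<open>a = b\<close> by (intro bexI[of _ c] bexI[of _ b]) auto
    qed
  qed
qed

lemma JK_disj:
  assumes M: "M \<in> Prim q I" and two: "x \<in> I" "y \<in> I" "x \<noteq> y"
  shows "Jset q I M \<inter> Kset I M = {}"
proof (rule ccontr)
  assume "Jset q I M \<inter> Kset I M \<noteq> {}"
  then obtain z where z: "z \<in> I" "\<forall>c\<in>I. M z c < q - 1" "\<forall>c\<in>I. 0 < M z c"
    by (auto simp: Jset_def Kset_def)
  obtain i where i: "i \<in> I" "i \<noteq> z" using two by blast
  obtain a b where ab: "a \<in> I" "b \<in> I" "a \<noteq> b" "0 < M i b" "M i a < q - 1"
    using row_two[OF Prim_D(1)[OF M] i(1) Prim_D(2)[OF M i(1)] Prim_D(3)[OF M i(1)] two] by blast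
  show False
    using NC_E[OF SN_D(2)[OF Prim_D(1)[OF M]] z(1) i(1) ab(1) ab(2)] i ab z by auto
qed

lemma JK_single:
  assumes M: "M \<in> SN q I" and j: "j1 \<in> Jset q I M" "j2 \<in> Jset q I M" "j1 \<noteq> j2"
    and k: "k1 \<in> Kset I M" "k2 \<in> Kset I M" "k1 \<noteq> k2"
  shows False
proof -
  have "M k2 j1 < q - 1" "M k1 j2 < q - 1"
    using j k qs_sym[OF SN_D(1)[OF M]] by (auto simp: Jset_def Kset_def)
  then show False
    using NC_E[OF SN_D(2)[OF M], of k1 k2 j1 j2] j k by (auto simp: Jset_def Kset_def)
qed

lemma star_lemma:
  assumes M: "M \<in> SN q I" and j: "j \<in> Jset q I M" and k: "k \<in> Kset I M" and jk: "j \<noteq> k"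
    and b: "b \<in> I" "0 < M j b"
  shows "M k b = q - 1"
proof (rule ccontr)
  assume ne: "M k b \<noteq> q - 1"
  have jI: "j \<in> I" and kI: "k \<in> I" using j k by (auto simp: Jset_def Kset_def)
  have "M k b < q" using qs_lt[OF SN_D(1)[OF M] kI b(1)] .
  with ne have lt: "M k b < q - 1" by linarith
  define a where "a = (if b = k then j else k)"
  have aI: "a \<in> I" using jI kI by (simp add: a_def)
  have ab: "a \<noteq> b" using jk by (auto simp: a_def)
  have "0 < M k a" using k aI by (auto simp: Kset_def)
  moreover have "M j a < q - 1" using j aI by (auto simp: Jset_def)
  ultimately show False
    using NC_E[OF SN_D(2)[OF M] kI jI aI b(1)] jk ab b lt by auto
qed

lemma struct_A:
  assumes M: "M \<in> Prim q I" and q: "q \<ge> 2" and J: "Jset q I M = {j}" and k: "k \<in> Kset I M" and jk: "j \<noteq> k"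
  shows "M j j = 0"
    and "\<And>c. c \<in> I \<Longrightarrow> c \<notin> Kset I M \<Longrightarrow> M j c = 0"
    and "\<And>k' c. k' \<in> Kset I M \<Longrightarrow> c \<in> I \<Longrightarrow> c \<noteq> j \<Longrightarrow> M k' c = q - 1"
proof -
  have S: "M \<in> SN q I" using Prim_D[OF M] by simp
  have qM: "qs q I M" using SN_D[OF S] by simp
  have jJ: "j \<in> Jset q I M" using J by simp
  have jI: "j \<in> I" and kI: "k \<in> I" using jJ k by (auto simp: Jset_def Kset_def)
  have sym: "M x y = M y x" for x y using qs_sym[OF qM] .
  show "M j j = 0"
  proof (rule ccontr)
    assume "M j j \<noteq> 0"
    hence "M k j = q - 1" using star_lemma[OF S jJ k jk jI] by simp
    moreover have "M j k < q - 1" using jJ kI by (auto simp: Jset_def)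
    ultimately show False using sym[of k j] by simp
  qed
  show "M j c = 0" if c: "c \<in> I" "c \<notin> Kset I M" for c
  proof (rule ccontr)
    assume "M j c \<noteq> 0"
    hence pos: "0 < M j c" by simp
    obtain d where d: "d \<in> I" "M c d = 0" using c by (auto simp: Kset_def)
    have "d \<noteq> j" using d pos sym[of c j] by auto
    obtain b where b: "b \<in> I" "0 < M d b" using Prim_D(2)[OF M d(1)] by (auto simp: zr_def)
    have "b \<noteq> c" using b d sym[of c d] by auto
    have "M j b < q - 1" using jJ b by (auto simp: Jset_def)
    moreover have "M d c < q - 1" using d sym[of c d] q by simp
    ultimately show False
      using NC_E[OF SN_D(2)[OF S] jI d(1) c(1) b(1)] \<open>d \<noteq> j\<close> \<open>b \<noteq> c\<close> pos b by auto
  qed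
  show "M k' c = q - 1" if k': "k' \<in> Kset I M" and c: "c \<in> I" "c \<noteq> j" for k' c
  proof (rule ccontr)
    assume ne: "M k' c \<noteq> q - 1"
    have k'I: "k' \<in> I" using k' by (simp add: Kset_def)
    have "M k' c < q" using qs_lt[OF qM k'I c(1)] .
    with ne have lt: "M k' c < q - 1" by linarith
    have "c \<notin> Jset q I M" using J c by auto
    then obtain e where e: "e \<in> I" "\<not> M c e < q - 1" using c by (auto simp: Jset_def)
    have e2: "M c e = q - 1" using e qs_lt[OF qM c(1) e(1)] by linarith
    have "e \<noteq> k'" using e2 lt sym[of k' c] by auto
    have "0 < M c e" using e2 q by simp
    moreover have "0 < M j k'" using k' jI sym[of j k'] by (auto simp: Kset_def)
    moreover have "M c k' < q - 1" using lt sym[of k' c] by simp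
    moreover have "M j e < q - 1" using jJ e by (auto simp: Jset_def)
    ultimately show False
      using NC_E[OF SN_D(2)[OF S] c(1) jI e(1) k'I] c \<open>e \<noteq> k'\<close> by auto
  qed
qed

lemma zr_wit: "y \<in> I \<Longrightarrow> M x y \<noteq> 0 \<Longrightarrow> \<not> zr I M x" by (auto simp: zr_def)
lemma fr_wit: "y \<in> I \<Longrightarrow> M x y \<noteq> q - 1 \<Longrightarrow> \<not> fr q I M x" by (auto simp: fr_def)

definition bld :: "nat \<Rightarrow> nat set \<Rightarrow> nat \<Rightarrow> nat set \<Rightarrow> (nat \<Rightarrow> nat) \<Rightarrow> (nat \<Rightarrow> nat \<Rightarrow> nat) \<Rightarrow> (nat \<Rightarrow> nat \<Rightarrow> nat)" where
  "bld q I j K c N = (\<lambda>a b. if a \<in> I \<and> b \<in> I then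
     (if a = j \<and> b = j then 0 else if a = j then (if b \<in> K then c b else 0)
      else if b = j then (if a \<in> K then c a else 0)
      else if a \<in> K \<or> b \<in> K then q - 1 else N a b) else 0)"

lemma bld_out: "\<not> (a \<in> I \<and> b \<in> I) \<Longrightarrow> bld q I j K c N a b = 0"
  unfolding bld_def by auto

definition AjK :: "nat \<Rightarrow> nat set \<Rightarrow> nat \<Rightarrow> nat set \<Rightarrow> (nat \<Rightarrow> nat \<Rightarrow> nat) set" where
  "AjK q I j K = {M \<in> Prim q I. Jset q I M = {j} \<and> Kset I M = K}"

lemma bld_in:
  assumes q: "q \<ge> 2" and jI: "j \<in> I" and KI: "K \<subseteq> I - {j}" and Kne: "K \<noteq> {}"
    and c: "c \<in> PiE K (\<lambda>_. {1..<q-1})" and N: "N \<in> SN q (I - {j} - K)"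
  shows "bld q I j K c N \<in> AjK q I j K"
proof -
  define W where "W = I - {j} - K"
  define Mb where "Mb = bld q I j K c N"
  have NW: "N \<in> SN q W" using N by (simp add: W_def)
  have qN: "qs q W N" and ncN: "NC q W N" using SN_D[OF NW] by auto
  have cK: "1 \<le> c k \<and> c k < q - 1" if "k \<in> K" for k using c that by (auto simp: PiE_def Pi_def)
  have cKq: "c k < q" if "k \<in> K" for k using cK[OF that] by linarith
  have jK: "j \<notin> K" using KI by auto
  have KI': "k \<in> I" if "k \<in> K" for k using KI that by auto
  have e_jj: "Mb j j = 0" using jI by (simp add: Mb_def bld_def)
  have e_j: "Mb j a = (if a \<in> K then c a else 0)" if "a \<in> I" for a
    using that jI jK by (auto simp: Mb_def bld_def)
  have e_j': "Mb a j = (if a \<in> K then c a else 0)" if "a \<in> I" for a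
    using that jI jK by (auto simp: Mb_def bld_def)
  have e_K: "Mb a b = q - 1 \<and> Mb b a = q - 1" if "a \<in> K" "b \<in> I" "b \<noteq> j" for a b
    using that KI jK by (auto simp: Mb_def bld_def)
  have e_W: "Mb a b = N a b" if "a \<in> W" "b \<in> W" for a b
    using that by (auto simp: Mb_def bld_def W_def)
  have cases3: "x = j \<or> x \<in> K \<or> x \<in> W" if "x \<in> I" for x using that by (auto simp: W_def)
  have WI: "x \<in> I" "x \<noteq> j" "x \<notin> K" if "x \<in> W" for x using that by (auto simp: W_def)
  obtain k0 where k0: "k0 \<in> K" using Kne by auto
  have qsM: "qs q I Mb"
  proof (rule qsI)
    fix a b assume ab: "a \<in> I" "b \<in> I"
    show "Mb a b < q"
    proof -
      consider "a = j" | "a \<in> K" | "a \<in> W" using cases3[OF ab(1)] by blast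
      then show ?thesis
      proof cases
        case 1 then show ?thesis using e_j[OF ab(2)] cKq q by auto
      next
        case 2 then show ?thesis using e_K[OF 2 ab(2)] e_j'[OF ab(1)] cKq[OF 2] q by (cases "b = j") auto
      next
        case 3
        consider "b = j" | "b \<in> K" | "b \<in> W" using cases3[OF ab(2)] by blast
        then show ?thesis
        proof cases
          case 1 then show ?thesis using e_j'[OF ab(1)] WI[OF 3] q by auto
        next
          case 2 then show ?thesis using e_K[OF 2 ab(1)] WI[OF 3] q by auto
        next
          case b3: 3 then show ?thesis using e_W[OF 3 b3] qs_lt[OF qN 3 b3] by simp
        qed
      qed
    qed
  next
    fix a b assume "\<not> (a \<in> I \<and> b \<in> I)"
    then show "Mb a b = 0" by (auto simp: Mb_def bld_def)
  next
    fix a b show "Mb a b = Mb b a"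
      using qs_sym[OF qN, of a b] by (auto simp: Mb_def bld_def)
  qed
  have ncM: "NC q I Mb"
    unfolding NC_def
  proof (intro ballI impI notI)
    fix i i' a b assume mem: "i \<in> I" "i' \<in> I" "a \<in> I" "b \<in> I" and d: "i \<noteq> i'" "a \<noteq> b"
      and p: "0 < Mb i a" "0 < Mb i' b" "Mb i b < q - 1" "Mb i' a < q - 1"
    have nj: "i \<noteq> j"
    proof
      assume "i = j"
      then have "a \<in> K" using p(1) e_j[OF mem(3)] by (auto split: if_splits)
      then show False using e_K[OF \<open>a \<in> K\<close> mem(2)] d \<open>i = j\<close> p(4) by auto
    qed
    have nj': "i' \<noteq> j"
    proof
      assume "i' = j"
      then have "b \<in> K" using p(2) e_j[OF mem(4)] by (auto split: if_splits)
      then show False using e_K[OF \<open>b \<in> K\<close> mem(1)] d \<open>i' = j\<close> p(3) by auto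
    qed
    have nK: "i \<notin> K"
    proof
      assume iK: "i \<in> K"
      have "b = j" using e_K[OF iK mem(4)] p(3) by auto
      then have "i' \<in> K" using p(2) e_j'[OF mem(2)] by (auto split: if_splits)
      then have "a = j" using e_K[OF \<open>i' \<in> K\<close> mem(3)] p(4) by auto
      then show False using \<open>b = j\<close> d by simp
    qed
    have nK': "i' \<notin> K"
    proof
      assume iK: "i' \<in> K"
      have "a = j" using e_K[OF iK mem(3)] p(4) by auto
      then have "i \<in> K" using p(1) e_j'[OF mem(1)] by (auto split: if_splits)
      then show False using nK by simp
    qed
    have iW: "i \<in> W" "i' \<in> W" using mem nj nj' nK nK' by (auto simp: W_def)
    have aW: "a \<in> W"
    proof -
      have "a \<noteq> j" using p(1) e_j'[OF mem(1)] nK by auto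
      moreover have "a \<notin> K"
      proof
        assume "a \<in> K" then show False using e_K[OF \<open>a \<in> K\<close> mem(2)] nj' p(4) by auto
      qed
      ultimately show ?thesis using mem by (auto simp: W_def)
    qed
    have bW: "b \<in> W"
    proof -
      have "b \<noteq> j" using p(2) e_j'[OF mem(2)] nK' by auto
      moreover have "b \<notin> K"
      proof
        assume "b \<in> K" then show False using e_K[OF \<open>b \<in> K\<close> mem(1)] nj p(3) by auto
      qed
      ultimately show ?thesis using mem by (auto simp: W_def)
    qed
    show False
      using NC_E[OF ncN iW(1) iW(2) aW bW d] p e_W iW aW bW by auto
  qed
  have SNM: "Mb \<in> SN q I" using qsM ncM by (simp add: SN_def)
  have nzr: "\<not> zr I Mb x" if xI: "x \<in> I" for x
  proof -
    consider "x = j" | "x \<in> K" | "x \<in> W" using cases3[OF xI] by blast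
    then show ?thesis
    proof cases
      case 1
      have "Mb j k0 \<noteq> 0" using e_j[OF KI'[OF k0]] k0 cK[OF k0] by auto
      then show ?thesis using 1 zr_wit[OF KI'[OF k0]] by simp
    next
      case 2
      have "x \<noteq> j" using 2 jK by auto
      then have "Mb x x \<noteq> 0" using e_K[OF 2 KI'[OF 2]] q by auto
      then show ?thesis using zr_wit[OF xI] by simp
    next
      case 3
      have "Mb x k0 \<noteq> 0" using e_K[OF k0 xI] WI[OF 3] q by auto
      then show ?thesis using zr_wit[OF KI'[OF k0]] by simp
    qed
  qed
  have nfr: "\<not> fr q I Mb x" if xI: "x \<in> I" for x
  proof -
    consider "x = j" | "x \<in> K" | "x \<in> W" using cases3[OF xI] by blast
    then show ?thesis
    proof cases
      case 1 then show ?thesis using e_jj jI q fr_wit[OF jI, of Mb x q] by simp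
    next
      case 2 then show ?thesis using e_j'[OF xI] cK[OF 2] jI fr_wit[OF jI, of Mb x q] by simp
    next
      case 3 then show ?thesis using e_j'[OF xI] WI[OF 3] jI q fr_wit[OF jI, of Mb x q] by simp
    qed
  qed
  have JM: "Jset q I Mb = {j}"
  proof (intro equalityI subsetI)
    fix x assume x: "x \<in> Jset q I Mb"
    hence xI: "x \<in> I" and xl: "\<forall>b\<in>I. Mb x b < q - 1" by (auto simp: Jset_def)
    consider "x = j" | "x \<in> K" | "x \<in> W" using cases3[OF xI] by blast
    then show "x \<in> {j}"
    proof cases
      case 1 then show ?thesis by simp
    next
      case 2
      have "x \<noteq> j" using 2 jK by auto
      then have "Mb x x = q - 1" using e_K[OF 2 xI] by auto
      then show ?thesis using xl xI by auto
    next
      case 3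
      have "Mb x k0 = q - 1" using e_K[OF k0 xI] WI[OF 3] by auto
      then show ?thesis using xl KI'[OF k0] by auto
    qed
  next
    fix x assume "x \<in> {j}"
    then have "x = j" by simp
    have "Mb j b < q - 1" if "b \<in> I" for b using e_j[OF that] cK q by auto
    then show "x \<in> Jset q I Mb" using \<open>x = j\<close> jI by (auto simp: Jset_def)
  qed
  have KM: "Kset I Mb = K"
  proof (intro equalityI subsetI)
    fix x assume x: "x \<in> Kset I Mb"
    hence xI: "x \<in> I" and xl: "\<forall>b\<in>I. 0 < Mb x b" by (auto simp: Kset_def)
    consider "x = j" | "x \<in> K" | "x \<in> W" using cases3[OF xI] by blast
    then show "x \<in> K"
    proof cases
      case 1 then show ?thesis using e_jj xl jI by auto
    next
      case 2 then show ?thesis by simp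
    next
      case 3 then show ?thesis using e_j'[OF xI] xl WI[OF 3] jI by auto
    qed
  next
    fix x assume xK: "x \<in> K"
    have "0 < Mb x b" if "b \<in> I" for b
      using e_j'[OF KI'[OF xK]] e_K[OF xK that] cK[OF xK] q xK by (cases "b = j") auto
    then show "x \<in> Kset I Mb" using KI'[OF xK] by (auto simp: Kset_def)
  qed
  show ?thesis
    using SNM nzr nfr JM KM unfolding AjK_def Prim_def Mb_def by auto
qed

lemma NC_cong: "NC q W M \<Longrightarrow> (\<And>a b. a \<in> W \<Longrightarrow> b \<in> W \<Longrightarrow> N a b = M a b) \<Longrightarrow> NC q W N"
  unfolding NC_def by simp

lemma AjK_bld:
  assumes q: "q \<ge> 2" and jI: "j \<in> I" and KI: "K \<subseteq> I - {j}" and Kne: "K \<noteq> {}"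
    and M: "M \<in> AjK q I j K"
  defines "W \<equiv> I - {j} - K"
  shows "restrict (M j) K \<in> PiE K (\<lambda>_. {1..<q-1})"
    and "(\<lambda>a b. if a \<in> W \<and> b \<in> W then M a b else 0) \<in> SN q W"
    and "M = bld q I j K (restrict (M j) K) (\<lambda>a b. if a \<in> W \<and> b \<in> W then M a b else 0)"
proof -
  have MP: "M \<in> Prim q I" and J: "Jset q I M = {j}" and K: "Kset I M = K"
    using M by (auto simp: AjK_def)
  have S: "M \<in> SN q I" using Prim_D[OF MP] by simp
  have qM: "qs q I M" and ncM: "NC q I M" using SN_D[OF S] by auto
  have sym: "M x y = M y x" for x y using qs_sym[OF qM] .
  obtain k where k: "k \<in> K" using Kne by auto
  have jk: "j \<noteq> k" using k KI by auto
  have kK: "k \<in> Kset I M" using k K by simp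
  have s1: "M j j = 0" using struct_A(1)[OF MP q J kK jk] .
  have s2: "M j c = 0" if "c \<in> I" "c \<notin> K" for c using struct_A(2)[OF MP q J kK jk, of c] that K by simp
  have s3: "M k' c = q - 1" if "k' \<in> K" "c \<in> I" "c \<noteq> j" for k' c
    using struct_A(3)[OF MP q J kK jk, of k' c] that K by simp
  have KI': "x \<in> I" "x \<noteq> j" if "x \<in> K" for x using KI that by auto
  show "restrict (M j) K \<in> PiE K (\<lambda>_. {1..<q-1})"
  proof (rule restrict_PiE_iff[THEN iffD2], intro ballI)
    fix x assume x: "x \<in> K"
    have "0 < M x j" using x K jI by (auto simp: Kset_def)
    moreover have "M j x < q - 1" using J KI'[OF x] by (auto simp: Jset_def)
    ultimately show "M j x \<in> {1..<q-1}" using sym[of x j] by auto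
  qed
  define N where "N = (\<lambda>a b. if a \<in> W \<and> b \<in> W then M a b else 0)"
  have WI: "W \<subseteq> I" by (auto simp: W_def)
  have "qs q W N"
  proof (rule qsI)
    show "N a b < q" if "a \<in> W" "b \<in> W" for a b using that qs_lt[OF qM] WI by (auto simp: N_def)
    show "N a b = 0" if "\<not> (a \<in> W \<and> b \<in> W)" for a b using that by (auto simp: N_def)
    show "N a b = N b a" for a b using sym[of a b] by (auto simp: N_def)
  qed
  moreover have "NC q W N" using NC_cong[OF NC_mono[OF ncM WI], of N] by (simp add: N_def)
  ultimately show "N \<in> SN q W" by (simp add: SN_def)
  show "M = bld q I j K (restrict (M j) K) N"
  proof (intro ext)
    fix a b
    show "M a b = bld q I j K (restrict (M j) K) N a b"
    proof (cases "a \<in> I \<and> b \<in> I")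
      case False then show ?thesis using qs_out[OF qM False] bld_out[OF False] by simp
    next
      case True
      then have aI: "a \<in> I" and bI: "b \<in> I" by auto
      show ?thesis
      proof (cases "a = j")
        case aj: True
        show ?thesis
        proof (cases "b = j")
          case True then show ?thesis using aj s1 aI by (simp add: bld_def)
        next
          case False then show ?thesis using aj s2[OF bI] aI bI by (auto simp: bld_def)
        qed
      next
        case anj: False
        show ?thesis
        proof (cases "b = j")
          case bj: True then show ?thesis using anj s2[OF aI] sym[of a b] aI bI by (auto simp: bld_def)
        next
          case bnj: False
          show ?thesis
          proof (cases "a \<in> K \<or> b \<in> K")
            case True
            then have "M a b = q - 1" using s3 aI bI anj bnj sym[of a b] by auto
            then show ?thesis using True aI bI anj bnj by (simp add: bld_def)
          next
            case False
            then have "a \<in> W" "b \<in> W" using aI bI anj bnj by (auto simp: W_def)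
            then show ?thesis using False aI bI anj bnj by (simp add: bld_def N_def)
          qed
        qed
      qed
    qed
  qed
qed

lemma bld_inj:
  assumes jI: "j \<in> I" and KI: "K \<subseteq> I - {j}"
    and c: "c \<in> PiE K (\<lambda>_. {1..<q-1})" and c': "c' \<in> PiE K (\<lambda>_. {1..<q-1})"
    and N: "N \<in> SN q (I - {j} - K)" and N': "N' \<in> SN q (I - {j} - K)"
    and eq: "bld q I j K c N = bld q I j K c' N'"
  shows "c = c' \<and> N = N'"
proof
  show "c = c'"
  proof (rule PiE_ext[OF c c'])
    fix x assume x: "x \<in> K"
    have "bld q I j K c N j x = bld q I j K c' N' j x" using eq by simp
    moreover have "x \<in> I" "x \<noteq> j" using x KI by auto
    ultimately show "c x = c' x" using x jI by (simp add: bld_def)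
  qed
  show "N = N'"
  proof (intro ext)
    fix a b
    show "N a b = N' a b"
    proof (cases "a \<in> I - {j} - K \<and> b \<in> I - {j} - K")
      case True
      have "bld q I j K c N a b = bld q I j K c' N' a b" using eq by simp
      then show ?thesis using True by (auto simp: bld_def)
    next
      case False
      then show ?thesis using qs_out[OF SN_D(1)[OF N] False] qs_out[OF SN_D(1)[OF N'] False] by simp
    qed
  qed
qed

lemma card_AjK:
  assumes q: "q \<ge> 2" and fin: "finite I" and jI: "j \<in> I" and KI: "K \<subseteq> I - {j}" and Kne: "K \<noteq> {}"
  shows "card (AjK q I j K) = (q - 2) ^ card K * card (SN q (I - {j} - K))"
proof -
  let ?D = "PiE K (\<lambda>_. {1..<q-1}) \<times> SN q (I - {j} - K)"
  let ?f = "\<lambda>(c, N). bld q I j K c N"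
  have "AjK q I j K = ?f ` ?D"
  proof (intro equalityI subsetI)
    fix M assume M: "M \<in> AjK q I j K"
    show "M \<in> ?f ` ?D"
      using AjK_bld[OF q jI KI Kne M]
      by (intro image_eqI[of _ _ "(restrict (M j) K, (\<lambda>a b. if a \<in> I - {j} - K \<and> b \<in> I - {j} - K then M a b else 0))"]) auto
  next
    fix M assume "M \<in> ?f ` ?D"
    then show "M \<in> AjK q I j K" using bld_in[OF q jI KI Kne] by auto
  qed
  moreover have "inj_on ?f ?D"
  proof (rule inj_onI)
    fix p p' assume p: "p \<in> ?D" "p' \<in> ?D" "?f p = ?f p'"
    obtain c N c' N' where "p = (c, N)" "p' = (c', N')" by (cases p, cases p')
    then show "p = p'" using p bld_inj[OF jI KI, of c q c' N N'] by auto
  qed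
  moreover have "finite K" using fin KI finite_subset by blast
  moreover have "card {1..<q-1} = q - 2" by simp
  ultimately show ?thesis
    by (simp only: card_image card_cartesian_product card_PiE prod_constant)
qed

definition PJ :: "nat \<Rightarrow> nat set \<Rightarrow> (nat \<Rightarrow> nat \<Rightarrow> nat) set" where
  "PJ q I = {M \<in> Prim q I. \<exists>j. Jset q I M = {j}}"

definition PK :: "nat \<Rightarrow> nat set \<Rightarrow> (nat \<Rightarrow> nat \<Rightarrow> nat) set" where
  "PK q I = {M \<in> Prim q I. \<exists>k. Kset I M = {k}}"

lemma finite_Prim: "finite I \<Longrightarrow> finite (Prim q I)"
  using finite_SN[of I q] by (rule finite_subset[rotated]) (auto simp: Prim_def)

lemma Prim_PJ_PK:
  assumes fin: "finite I" and ne: "I \<noteq> {}" and q: "q \<ge> 2"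
  shows "Prim q I = PJ q I \<union> PK q I"
proof (intro equalityI subsetI)
  fix M assume M: "M \<in> Prim q I"
  have Jn: "Jset q I M \<noteq> {}" using Jset_ne[OF M fin ne] .
  have Kn: "Kset I M \<noteq> {}" using Kset_ne[OF M fin ne q] .
  show "M \<in> PJ q I \<union> PK q I"
  proof (rule ccontr)
    assume "M \<notin> PJ q I \<union> PK q I"
    then have nJ: "\<forall>j. Jset q I M \<noteq> {j}" and nK: "\<forall>k. Kset I M \<noteq> {k}" using M by (auto simp: PJ_def PK_def)
    obtain j1 where j1: "j1 \<in> Jset q I M" using Jn by auto
    obtain j2 where j2: "j2 \<in> Jset q I M" "j2 \<noteq> j1" using nJ j1 Jn by blast
    obtain k1 where k1: "k1 \<in> Kset I M" using Kn by auto
    obtain k2 where k2: "k2 \<in> Kset I M" "k2 \<noteq> k1" using nK k1 Kn by blast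
    show False using JK_single[OF Prim_D(1)[OF M] j1 j2(1) _ k1 k2(1)] j2 k2 by auto
  qed
qed (auto simp: PJ_def PK_def)

lemma card_PK: assumes q: "q \<ge> 2" shows "card (PK q I) = card (PJ q I)"
proof -
  have "PK q I = cpl q I ` PJ q I"
  proof (intro equalityI subsetI)
    fix M assume M: "M \<in> PK q I"
    then have MP: "M \<in> Prim q I" and S: "M \<in> SN q I" by (auto simp: PK_def Prim_def)
    have "cpl q I M \<in> PJ q I"
      using cpl_Prim[OF MP] Kset_cpl[OF S q] M by (auto simp: PJ_def PK_def)
    moreover have "M = cpl q I (cpl q I M)" using cpl_cpl[OF S] by simp
    ultimately show "M \<in> cpl q I ` PJ q I" by blast
  next
    fix M assume "M \<in> cpl q I ` PJ q I"
    then obtain M0 where M0: "M0 \<in> PJ q I" "M = cpl q I M0" by auto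
    then have MP: "M0 \<in> Prim q I" and S: "M0 \<in> SN q I" by (auto simp: PJ_def Prim_def)
    show "M \<in> PK q I" using cpl_Prim[OF MP] Kset_cpl[OF S q] M0 by (auto simp: PJ_def PK_def)
  qed
  moreover have "inj_on (cpl q I) (PJ q I)"
    using cpl_inj by (rule inj_on_subset) (auto simp: PJ_def Prim_def)
  ultimately show ?thesis by (simp add: card_image)
qed

lemma PJ_UN:
  assumes fin: "finite I" and q: "q \<ge> 2" and two: "x \<in> I" "y \<in> I" "x \<noteq> y"
  shows "PJ q I = (\<Union>j\<in>I. \<Union>K\<in>{K. K \<subseteq> I - {j} \<and> K \<noteq> {}}. AjK q I j K)"
proof (intro equalityI subsetI)
  fix M assume M: "M \<in> PJ q I"
  then obtain j where j: "Jset q I M = {j}" and MP: "M \<in> Prim q I" by (auto simp: PJ_def)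
  have jI: "j \<in> I" using j by (auto simp: Jset_def)
  have ne: "I \<noteq> {}" using two by auto
  have Kn: "Kset I M \<noteq> {}" using Kset_ne[OF MP fin ne q] .
  have disj: "Jset q I M \<inter> Kset I M = {}" using JK_disj[OF MP two] .
  have "Kset I M \<subseteq> I - {j}" using disj j by (auto simp: Kset_def)
  then show "M \<in> (\<Union>j\<in>I. \<Union>K\<in>{K. K \<subseteq> I - {j} \<and> K \<noteq> {}}. AjK q I j K)"
    using jI Kn j MP by (auto simp: AjK_def)
qed (auto simp: AjK_def PJ_def)

lemma PJK_UN:
  assumes fin: "finite I" and q: "q \<ge> 2" and two: "x \<in> I" "y \<in> I" "x \<noteq> y"
  shows "PJ q I \<inter> PK q I = (\<Union>j\<in>I. \<Union>k\<in>I - {j}. AjK q I j {k})"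
proof (intro equalityI subsetI)
  fix M assume M: "M \<in> PJ q I \<inter> PK q I"
  then obtain j k where j: "Jset q I M = {j}" and k: "Kset I M = {k}" and MP: "M \<in> Prim q I"
    by (auto simp: PJ_def PK_def)
  have jI: "j \<in> I" using j by (auto simp: Jset_def)
  have kI: "k \<in> I" using k by (auto simp: Kset_def)
  have disj: "Jset q I M \<inter> Kset I M = {}" using JK_disj[OF MP two] .
  then have "k \<noteq> j" using j k by auto
  then show "M \<in> (\<Union>j\<in>I. \<Union>k\<in>I - {j}. AjK q I j {k})"
    using jI kI j k MP by (auto simp: AjK_def)
qed (auto simp: AjK_def PJ_def PK_def)

lemma AjK_disj: "(j, K) \<noteq> (j', K') \<Longrightarrow> AjK q I j K \<inter> AjK q I j' K' = {}"
  by (auto simp: AjK_def)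

lemma finite_AjK: "finite I \<Longrightarrow> finite (AjK q I j K)"
  using finite_Prim[of I q] by (rule finite_subset[rotated]) (auto simp: AjK_def)

lemma card_PJ:
  assumes fin: "finite I" and q: "q \<ge> 2" and two: "x \<in> I" "y \<in> I" "x \<noteq> y"
  shows "card (PJ q I) = (\<Sum>j\<in>I. \<Sum>K\<in>{K. K \<subseteq> I - {j} \<and> K \<noteq> {}}. (q - 2) ^ card K * card (SN q (I - {j} - K)))"
proof -
  have "card (PJ q I) = (\<Sum>j\<in>I. card (\<Union>K\<in>{K. K \<subseteq> I - {j} \<and> K \<noteq> {}}. AjK q I j K))"
    unfolding PJ_UN[OF fin q two]
    apply (rule card_UN_disjoint)
    using fin apply simp
    using fin apply (simp add: finite_AjK)
    apply (auto simp: AjK_def)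
    done
  also have "\<dots> = (\<Sum>j\<in>I. \<Sum>K\<in>{K. K \<subseteq> I - {j} \<and> K \<noteq> {}}. card (AjK q I j K))"
  proof (rule sum.cong[OF refl])
    fix j assume "j \<in> I"
    have "finite {K. K \<subseteq> I - {j} \<and> K \<noteq> {}}" using fin by auto
    then show "card (\<Union>K\<in>{K. K \<subseteq> I - {j} \<and> K \<noteq> {}}. AjK q I j K) = (\<Sum>K\<in>{K. K \<subseteq> I - {j} \<and> K \<noteq> {}}. card (AjK q I j K))"
      apply (rule card_UN_disjoint)
    using fin apply simp
    using fin apply (simp add: finite_AjK)
    apply (auto simp: AjK_def)
    done
  qed
  also have "\<dots> = (\<Sum>j\<in>I. \<Sum>K\<in>{K. K \<subseteq> I - {j} \<and> K \<noteq> {}}. (q - 2) ^ card K * card (SN q (I - {j} - K)))"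
    by (intro sum.cong refl) (auto simp: card_AjK[OF q fin])
  finally show ?thesis .
qed

lemma card_PJK:
  assumes fin: "finite I" and q: "q \<ge> 2" and two: "x \<in> I" "y \<in> I" "x \<noteq> y"
  shows "card (PJ q I \<inter> PK q I) = (\<Sum>j\<in>I. \<Sum>k\<in>I - {j}. (q - 2) * card (SN q (I - {j} - {k})))"
proof -
  have "card (PJ q I \<inter> PK q I) = (\<Sum>j\<in>I. card (\<Union>k\<in>I - {j}. AjK q I j {k}))"
    unfolding PJK_UN[OF fin q two]
    apply (rule card_UN_disjoint)
    using fin apply simp
    using fin apply (simp add: finite_AjK)
    apply (auto simp: AjK_def)
    done
  also have "\<dots> = (\<Sum>j\<in>I. \<Sum>k\<in>I - {j}. card (AjK q I j {k}))"
  proof (rule sum.cong[OF refl])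
    fix j assume "j \<in> I"
    show "card (\<Union>k\<in>I - {j}. AjK q I j {k}) = (\<Sum>k\<in>I - {j}. card (AjK q I j {k}))"
      apply (rule card_UN_disjoint)
    using fin apply simp
    using fin apply (simp add: finite_AjK)
    apply (auto simp: AjK_def)
    done
  qed
  also have "\<dots> = (\<Sum>j\<in>I. \<Sum>k\<in>I - {j}. (q - 2) * card (SN q (I - {j} - {k})))"
    by (intro sum.cong refl) (auto simp: card_AjK[OF q fin])
  finally show ?thesis .
qed

lemma card_Prim_two:
  assumes fin: "finite I" and q: "q \<ge> 2" and two: "x \<in> I" "y \<in> I" "x \<noteq> y"
  shows "card (Prim q I) + card (PJ q I \<inter> PK q I) = 2 * card (PJ q I)"
proof -
  have ne: "I \<noteq> {}" using two by auto
  have f1: "finite (PJ q I)" "finite (PK q I)"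
    using finite_Prim[OF fin, of q] by (auto simp: PJ_def PK_def intro: finite_subset[rotated])
  show ?thesis
    using card_Un_Int[OF f1] Prim_PJ_PK[OF fin ne q] card_PK[OF q, of I] by simp
qed


lemma card_SN_empty: "card (SN q {}) = 1"
proof -
  have "SN q {} = {\<lambda>a b. 0}"
  proof (intro equalityI subsetI)
    fix M assume "M \<in> SN q {}"
    then have "qs q {} M" by (simp add: SN_def)
    then have "M = (\<lambda>a b. 0)" using qs_out[of q "{}" M] by auto
    then show "M \<in> {\<lambda>a b. 0}" by simp
  next
    fix M assume "M \<in> {\<lambda>(a::nat) (b::nat). (0::nat)}"
    then show "M \<in> SN q {}" by (auto simp: SN_def qs_def NC_def)
  qed
  then show ?thesis by simp
qed

lemma card_Prim_empty: "card (Prim q {}) = 1"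
proof -
  have "Prim q {} = SN q {}" by (auto simp: Prim_def)
  then show ?thesis using card_SN_empty by simp
qed

lemma card_Prim_single:
  assumes q: "q \<ge> 2"
  shows "card (Prim q {x}) = q - 2"
proof -
  let ?f = "\<lambda>v a b. if a = x \<and> b = x then v else (0::nat)"
  have "Prim q {x} = ?f ` {1..<q-1}"
  proof (intro equalityI subsetI)
    fix M assume M: "M \<in> Prim q {x}"
    then have qM: "qs q {x} M" by (simp add: Prim_def SN_def)
    have "M x x \<noteq> 0" using Prim_D(2)[OF M, of x] by (simp add: zr_def)
    moreover have "M x x \<noteq> q - 1" using Prim_D(3)[OF M, of x] by (simp add: fr_def)
    moreover have "M x x < q" using qs_lt[OF qM] by simp
    ultimately have "M x x \<in> {1..<q-1}" by auto
    moreover have "M = ?f (M x x)" using qs_out[OF qM] by (auto simp: fun_eq_iff)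
    ultimately show "M \<in> ?f ` {1..<q-1}" by blast
  next
    fix M assume "M \<in> ?f ` {1..<q-1}"
    then obtain v where v: "v \<in> {1..<q-1}" "M = ?f v" by auto
    have "qs q {x} M" using v by (auto simp: qs_def)
    moreover have "NC q {x} M" by (auto simp: NC_def)
    ultimately show "M \<in> Prim q {x}" using v by (auto simp: Prim_def SN_def zr_def fr_def)
  qed
  moreover have "inj_on ?f {1..<q-1}"
    by (intro inj_onI) (metis (mono_tags))
  ultimately show ?thesis by (simp add: card_image)
qed

lemma sum_subsets_card:
  assumes "finite A"
  shows "(\<Sum>Z\<in>{Z. Z \<subseteq> A \<and> Z \<noteq> {}}. f (card Z)) = (\<Sum>k=1..card A. (card A choose k) * f k)"
proof -
  have fin: "finite {Z. Z \<subseteq> A \<and> Z \<noteq> {}}" using assms by auto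
  have img: "card ` {Z. Z \<subseteq> A \<and> Z \<noteq> {}} \<subseteq> {1..card A}"
  proof
    fix k assume "k \<in> card ` {Z. Z \<subseteq> A \<and> Z \<noteq> {}}"
    then obtain Z where Z: "Z \<subseteq> A" "Z \<noteq> {}" "k = card Z" by auto
    have "finite Z" using Z assms finite_subset by auto
    then have "card Z > 0" using Z by auto
    moreover have "card Z \<le> card A" using Z assms card_mono by auto
    ultimately show "k \<in> {1..card A}" using Z by auto
  qed
  have "(\<Sum>Z\<in>{Z. Z \<subseteq> A \<and> Z \<noteq> {}}. f (card Z)) =
        (\<Sum>k=1..card A. \<Sum>Z\<in>{Z \<in> {Z. Z \<subseteq> A \<and> Z \<noteq> {}}. card Z = k}. f (card Z))"
    by (rule sum.group[OF fin _ img, symmetric]) simp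
  also have "\<dots> = (\<Sum>k=1..card A. (card A choose k) * f k)"
  proof (rule sum.cong[OF refl])
    fix k assume k: "k \<in> {1..card A}"
    have "{Z \<in> {Z. Z \<subseteq> A \<and> Z \<noteq> {}}. card Z = k} = {Z. Z \<subseteq> A \<and> card Z = k}"
      using k by auto
    then show "(\<Sum>Z\<in>{Z \<in> {Z. Z \<subseteq> A \<and> Z \<noteq> {}}. card Z = k}. f (card Z)) = (card A choose k) * f k"
      using n_subsets[OF assms, of k] by simp
  qed
  finally show ?thesis .
qed

definition gN :: "nat \<Rightarrow> nat \<Rightarrow> nat" where "gN q n = card (SN q {..<n})"
definition nN :: "nat \<Rightarrow> nat \<Rightarrow> nat" where "nN q n = card (N0 q {..<n})"
definition pN :: "nat \<Rightarrow> nat \<Rightarrow> nat" where "pN q n = card (Prim q {..<n})"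

definition Zf :: "nat \<Rightarrow> nat \<Rightarrow> nat" where "Zf q n = (\<Sum>k=1..n. (n choose k) * nN q (n - k))"
definition Pf :: "nat \<Rightarrow> nat \<Rightarrow> nat" where
  "Pf q n = n * (\<Sum>k=1..n-1. ((n-1) choose k) * ((q - 2) ^ k * gN q (n - 1 - k)))"

lemma ZS_formula:
  assumes fin: "finite I" and q: "q \<ge> 2"
    and IH: "\<And>I'. finite I' \<Longrightarrow> card I' < card I \<Longrightarrow> card (N0 q I') = nN q (card I')"
  shows "card (ZS q I) = Zf q (card I)"
proof -
  have "card (ZS q I) = (\<Sum>Z\<in>{Z. Z \<subseteq> I \<and> Z \<noteq> {}}. card (N0 q (I - Z)))"
    using card_ZS[OF fin] q by simp
  also have "\<dots> = (\<Sum>Z\<in>{Z. Z \<subseteq> I \<and> Z \<noteq> {}}. nN q (card I - card Z))"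
  proof (rule sum.cong[OF refl])
    fix Z assume Z: "Z \<in> {Z. Z \<subseteq> I \<and> Z \<noteq> {}}"
    have fZ: "finite Z" using Z fin finite_subset by auto
    have cd: "card (I - Z) = card I - card Z" using Z fZ by (simp add: card_Diff_subset)
    have "card Z > 0" using Z fZ by auto
    moreover have "card Z \<le> card I" using Z fin by (simp add: card_mono)
    ultimately have "card (I - Z) < card I" using cd by linarith
    then show "card (N0 q (I - Z)) = nN q (card I - card Z)" using IH[of "I - Z"] fin cd by simp
  qed
  also have "\<dots> = Zf q (card I)"
    unfolding Zf_def by (rule sum_subsets_card[OF fin, of "\<lambda>k. nN q (card I - k)"])
  finally show ?thesis .
qed

lemma PJ_formula:
  assumes fin: "finite I" and q: "q \<ge> 2" and two: "x \<in> I" "y \<in> I" "x \<noteq> y"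
    and IH: "\<And>I'. finite I' \<Longrightarrow> card I' < card I \<Longrightarrow> card (SN q I') = gN q (card I')"
  shows "card (PJ q I) = Pf q (card I)"
proof -
  let ?n = "card I"
  have "card (PJ q I) = (\<Sum>j\<in>I. \<Sum>K\<in>{K. K \<subseteq> I - {j} \<and> K \<noteq> {}}. (q - 2) ^ card K * card (SN q (I - {j} - K)))"
    using card_PJ[OF fin q two] .
  also have "\<dots> = (\<Sum>j\<in>I. \<Sum>k=1..?n-1. ((?n-1) choose k) * ((q - 2) ^ k * gN q (?n - 1 - k)))"
  proof (rule sum.cong[OF refl])
    fix j assume j: "j \<in> I"
    have fj: "finite (I - {j})" using fin by simp
    have cj: "card (I - {j}) = ?n - 1" using j fin by simp
    have "(\<Sum>K\<in>{K. K \<subseteq> I - {j} \<and> K \<noteq> {}}. (q - 2) ^ card K * card (SN q (I - {j} - K)))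
        = (\<Sum>K\<in>{K. K \<subseteq> I - {j} \<and> K \<noteq> {}}. (q - 2) ^ card K * gN q (?n - 1 - card K))"
    proof (rule sum.cong[OF refl])
      fix K assume K: "K \<in> {K. K \<subseteq> I - {j} \<and> K \<noteq> {}}"
      have fK: "finite K" using K fj finite_subset by auto
      have cd: "card (I - {j} - K) = ?n - 1 - card K" using K fK cj by (simp add: card_Diff_subset)
      have "card (I - {j} - K) < ?n" using cd j fin by (metis card_gt_0_iff diff_le_self empty_iff le_less_trans diff_less zero_less_one)
      then show "(q - 2) ^ card K * card (SN q (I - {j} - K)) = (q - 2) ^ card K * gN q (?n - 1 - card K)"
        using IH[of "I - {j} - K"] fin cd by simp
    qed
    also have "\<dots> = (\<Sum>k=1..?n-1. ((?n-1) choose k) * ((q - 2) ^ k * gN q (?n - 1 - k)))"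
      using sum_subsets_card[OF fj, of "\<lambda>k. (q - 2) ^ k * gN q (?n - 1 - k)"] cj by simp
    finally show "(\<Sum>K\<in>{K. K \<subseteq> I - {j} \<and> K \<noteq> {}}. (q - 2) ^ card K * card (SN q (I - {j} - K)))
        = (\<Sum>k=1..?n-1. ((?n-1) choose k) * ((q - 2) ^ k * gN q (?n - 1 - k)))" .
  qed
  also have "\<dots> = Pf q ?n" by (simp add: Pf_def)
  finally show ?thesis .
qed

lemma PJK_formula:
  assumes fin: "finite I" and q: "q \<ge> 2" and two: "x \<in> I" "y \<in> I" "x \<noteq> y"
    and IH: "\<And>I'. finite I' \<Longrightarrow> card I' < card I \<Longrightarrow> card (SN q I') = gN q (card I')"
  shows "card (PJ q I \<inter> PK q I) = card I * ((card I - 1) * ((q - 2) * gN q (card I - 2)))"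
proof -
  let ?n = "card I"
  have "card (PJ q I \<inter> PK q I) = (\<Sum>j\<in>I. \<Sum>k\<in>I - {j}. (q - 2) * card (SN q (I - {j} - {k})))"
    using card_PJK[OF fin q two] .
  also have "\<dots> = (\<Sum>j\<in>I. \<Sum>k\<in>I - {j}. (q - 2) * gN q (?n - 2))"
  proof (intro sum.cong refl)
    fix j k assume j: "j \<in> I" and k: "k \<in> I - {j}"
    have cd: "card (I - {j} - {k}) = ?n - 2" using j k fin by (simp add: card_Diff_subset)
    have "card {x, y} \<le> ?n" using two fin by (intro card_mono) auto
    then have "?n \<ge> 2" using two by simp
    then have "card (I - {j} - {k}) < ?n" using cd by linarith
    then show "(q - 2) * card (SN q (I - {j} - {k})) = (q - 2) * gN q (?n - 2)"
      using IH[of "I - {j} - {k}"] fin cd by simp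
  qed
  also have "\<dots> = ?n * ((?n - 1) * ((q - 2) * gN q (?n - 2)))"
    using fin by (simp add: card_Diff_subset)
  finally show ?thesis .
qed

lemma invariance:
  assumes q: "q \<ge> 2"
  shows "finite I \<Longrightarrow> card (SN q I) = gN q (card I) \<and> card (N0 q I) = nN q (card I)"
proof (induction "card I" arbitrary: I rule: less_induct)
  case less
  let ?n = "card I"
  let ?C = "{..<?n}"
  have fC: "finite ?C" and cC: "card ?C = ?n" by auto
  have IH1: "card (SN q I') = gN q (card I')" if "finite I'" "card I' < ?n" for I'
    using less.hyps that by blast
  have IH0: "card (N0 q I') = nN q (card I')" if "finite I'" "card I' < ?n" for I'
    using less.hyps that by blast
  have Z1: "card (ZS q I) = Zf q ?n" using ZS_formula[OF less.prems q] IH0 by blast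
  have Z2: "card (ZS q ?C) = Zf q ?n" using ZS_formula[OF fC q] IH0 cC by simp
  have P: "card (Prim q I) = card (Prim q ?C)"
  proof (cases "?n \<ge> 2")
    case True
    obtain x y where xy: "x \<in> I" "y \<in> I" "x \<noteq> y"
      using True less.prems by (metis card_le_Suc0_iff_eq not_less_eq_eq numeral_2_eq_2)
    have xyC: "0 \<in> ?C" "1 \<in> ?C" "(0::nat) \<noteq> 1" using True by auto
    have a: "card (Prim q I) + ?n * ((?n - 1) * ((q - 2) * gN q (?n - 2))) = 2 * Pf q ?n"
      using card_Prim_two[OF less.prems q xy] PJ_formula[OF less.prems q xy] PJK_formula[OF less.prems q xy] IH1
      by simp
    have b: "card (Prim q ?C) + ?n * ((?n - 1) * ((q - 2) * gN q (?n - 2))) = 2 * Pf q ?n"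
      using card_Prim_two[OF fC q xyC] PJ_formula[OF fC q xyC] PJK_formula[OF fC q xyC] IH1 cC
      by simp
    from a b show ?thesis by simp
  next
    case False
    then consider "?n = 0" | "?n = 1" by linarith
    then show ?thesis
    proof cases
      case 1
      then have "I = {}" using less.prems by simp
      then show ?thesis using 1 by simp
    next
      case 2
      then obtain x where "I = {x}" using card_1_singletonE by blast
      moreover have "?C = {0}" using 2 by auto
      ultimately show ?thesis using card_Prim_single[OF q] by simp
    qed
  qed
  have S1: "card (SN q I) = card (Prim q I) + 2 * Zf q ?n" using SN_split(1)[OF q less.prems] Z1 by simp
  have S2: "card (SN q ?C) = card (Prim q ?C) + 2 * Zf q ?n" using SN_split(1)[OF q fC] Z2 by simp
  have SN: "card (SN q I) = gN q ?n" using S1 S2 P by (simp add: gN_def)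
  have "card (N0 q I) = card (SN q I) - Zf q ?n" using SN_split(2)[OF q less.prems] Z1 by simp
  moreover have "card (N0 q ?C) = card (SN q ?C) - Zf q ?n" using SN_split(2)[OF q fC] Z2 by simp
  ultimately have "card (N0 q I) = nN q ?n" using SN S1 S2 P by (simp add: gN_def nN_def)
  with SN show ?case by simp
qed


lemma R_all:
  assumes q: "q \<ge> 2"
  shows "gN q n = nN q n + Zf q n" "gN q n = pN q n + 2 * Zf q n"
proof -
  have fC: "finite {..<n}" by simp
  have IH0: "card (N0 q I') = nN q (card I')" if "finite I'" for I'
    using invariance[OF q that] by simp
  have Z: "card (ZS q {..<n}) = Zf q n" using ZS_formula[OF fC q] IH0 by simp
  show "gN q n = nN q n + Zf q n" using SN_split(2)[OF q fC] Z by (simp add: gN_def nN_def)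
  show "gN q n = pN q n + 2 * Zf q n" using SN_split(1)[OF q fC] Z by (simp add: gN_def pN_def)
qed

lemma R3:
  assumes q: "q \<ge> 2"
  shows "pN q 0 = 1" "pN q 1 = q - 2"
    "n \<ge> 2 \<Longrightarrow> pN q n + n * ((n - 1) * ((q - 2) * gN q (n - 2))) = 2 * Pf q n"
proof -
  show "pN q 0 = 1" using card_Prim_empty by (simp add: pN_def)
  have "{..<1::nat} = {0}" by auto
  then show "pN q 1 = q - 2" using card_Prim_single[OF q] by (simp add: pN_def)
  assume n: "n \<ge> 2"
  have fC: "finite {..<n}" by simp
  have xyC: "0 \<in> {..<n}" "1 \<in> {..<n}" "(0::nat) \<noteq> 1" using n by auto
  have IH1: "card (SN q I') = gN q (card I')" if "finite I'" for I'
    using invariance[OF q that] by simp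
  show "pN q n + n * ((n - 1) * ((q - 2) * gN q (n - 2))) = 2 * Pf q n"
    using card_Prim_two[OF fC q xyC] PJ_formula[OF fC q xyC] PJK_formula[OF fC q xyC] IH1
    by (simp add: pN_def)
qed

lemma egf_mult_nth:
  fixes a b :: "nat \<Rightarrow> real"
  shows "(Abs_fps (\<lambda>n. a n / fact n) * Abs_fps (\<lambda>n. b n / fact n)) $ n = (\<Sum>k\<le>n. real (n choose k) * a k * b (n - k)) / fact n"
proof -
  have "(Abs_fps (\<lambda>n. a n / fact n) * Abs_fps (\<lambda>n. b n / fact n)) $ n = (\<Sum>k=0..n. a k / fact k * (b (n - k) / fact (n - k)))" by (simp add: fps_mult_nth)
  also have "\<dots> = (\<Sum>k\<le>n. real (n choose k) * a k * b (n - k) / fact n)"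
  proof (rule sum.cong)
    show "{0..n} = {..n}" by auto
  next
    fix k assume "k \<in> {..n}"
    then have k: "k \<le> n" by simp
    show "a k / fact k * (b (n - k) / fact (n - k)) = real (n choose k) * a k * b (n - k) / fact n"
      using binomial_fact[OF k, where 'a=real] by (simp add: field_simps)
  qed
  also have "\<dots> = (\<Sum>k\<le>n. real (n choose k) * a k * b (n - k)) / fact n"
    by (simp add: sum_divide_distrib)
  finally show ?thesis .
qed

lemma exp_egf: "fps_exp (c::real) = Abs_fps (\<lambda>n. c ^ n / fact n)"
  by (simp add: fps_eq_iff)

lemma exp1_egf: "fps_exp (c::real) - 1 = Abs_fps (\<lambda>n. (if n = 0 then 0 else c ^ n) / fact n)"
  by (simp add: fps_eq_iff)

lemma sum_split0:
  fixes f :: "nat \<Rightarrow> 'a::comm_monoid_add"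
  shows "(\<Sum>k\<le>n. f k) = f 0 + (\<Sum>k=1..n. f k)"
proof -
  have "{..n} - {0} = {1..n}" by auto
  then show ?thesis using sum.remove[of "{..n}" 0 f] by simp
qed

definition egf :: "(nat \<Rightarrow> nat) \<Rightarrow> real fps" where
  "egf a = Abs_fps (\<lambda>n. real (a n) / fact n)"

lemma Eq1:
  assumes q: "q \<ge> 2"
  shows "egf (gN q) = fps_exp 1 * egf (nN q)"
proof (rule fps_ext)
  fix n
  have "(fps_exp 1 * egf (nN q)) $ n = (\<Sum>k\<le>n. real (n choose k) * 1 * real (nN q (n - k))) / fact n"
    unfolding exp_egf egf_def using egf_mult_nth[of "\<lambda>n. 1 ^ n" "\<lambda>n. real (nN q n)" n] by simp
  also have "(\<Sum>k\<le>n. real (n choose k) * 1 * real (nN q (n - k))) = real (nN q n + Zf q n)"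
    unfolding Zf_def by (simp add: sum_split0[of _ n])
  also have "\<dots> = real (gN q n)" using R_all(1)[OF q, of n] by simp
  finally show "egf (gN q) $ n = (fps_exp 1 * egf (nN q)) $ n" by (simp add: egf_def)
qed

lemma Eq2:
  assumes q: "q \<ge> 2"
  shows "egf (gN q) = egf (pN q) + (fps_exp 1 - 1) * egf (nN q) + (fps_exp 1 - 1) * egf (nN q)"
proof (rule fps_ext)
  fix n
  have "((fps_exp 1 - 1) * egf (nN q)) $ n
     = (\<Sum>k\<le>n. real (n choose k) * (if k = 0 then 0 else 1 ^ k) * real (nN q (n - k))) / fact n"
    unfolding exp1_egf egf_def
    using egf_mult_nth[of "\<lambda>n. if n = 0 then 0 else 1 ^ n" "\<lambda>n. real (nN q n)" n] by simp
  also have "(\<Sum>k\<le>n. real (n choose k) * (if k = 0 then 0 else 1 ^ k) * real (nN q (n - k))) = real (Zf q n)"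
    unfolding Zf_def by (simp add: sum_split0[of _ n])
  finally have "((fps_exp 1 - 1) * egf (nN q)) $ n = real (Zf q n) / fact n" .
  moreover have "real (gN q n) = real (pN q n) + real (Zf q n) + real (Zf q n)"
    using R_all(2)[OF q, of n] by simp
  moreover have "(egf (pN q) + (fps_exp 1 - 1) * egf (nN q) + (fps_exp 1 - 1) * egf (nN q)) $ n
      = egf (pN q) $ n + ((fps_exp 1 - 1) * egf (nN q)) $ n + ((fps_exp 1 - 1) * egf (nN q)) $ n"
    by (simp only: fps_add_nth)
  ultimately show "egf (gN q) $ n = (egf (pN q) + (fps_exp 1 - 1) * egf (nN q) + (fps_exp 1 - 1) * egf (nN q)) $ n"
    by (simp add: egf_def add_divide_distrib)
qed

lemma alg_lemma:
  fixes S g p F x :: real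
  assumes "F > 0" "x \<ge> 0"
  shows "(2 * ((x + 2) * S) - (x + 2) * ((x + 1) * (p * g))) / ((x + 2) * ((x + 1) * F))
       = 2 * (S / ((x + 1) * F)) - p * (g / F)"
proof -
  have a: "x + 2 \<noteq> 0" "x + 1 \<noteq> 0" "F \<noteq> 0" using assms by auto
  have "(2 * ((x + 2) * S) - (x + 2) * ((x + 1) * (p * g))) = (x + 2) * (2 * S - (x + 1) * (p * g))"
    by (simp add: algebra_simps)
  then have "(2 * ((x + 2) * S) - (x + 2) * ((x + 1) * (p * g))) / ((x + 2) * ((x + 1) * F))
      = (2 * S - (x + 1) * (p * g)) / ((x + 1) * F)"
    using a by simp
  also have "\<dots> = 2 * S / ((x + 1) * F) - ((x + 1) * (p * g)) / ((x + 1) * F)"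
    by (rule diff_divide_distrib)
  also have "((x + 1) * (p * g)) / ((x + 1) * F) = p * g / F" using a by simp
  finally show ?thesis by simp
qed

lemma Eq3:
  assumes q: "q \<ge> 2"
  defines "p \<equiv> real q - 2"
  shows "egf (pN q) = 1 + fps_const p * fps_X + fps_X * ((fps_exp p - 1) * egf (gN q)
      + (fps_exp p - 1) * egf (gN q) - fps_const p * (fps_X * egf (gN q)))"
proof (rule fps_ext)
  fix n
  let ?G = "egf (gN q)"
  let ?Y = "(fps_exp p - 1) * ?G"
  let ?H = "?Y + ?Y - fps_const p * (fps_X * ?G)"
  have pq: "real (q - 2) = p" using q by (simp add: p_def of_nat_diff)
  have Yn: "?Y $ m = (\<Sum>k=1..m. real (m choose k) * p ^ k * real (gN q (m - k))) / fact m" for m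
  proof -
    have "?Y $ m = (\<Sum>k\<le>m. real (m choose k) * (if k = 0 then 0 else p ^ k) * real (gN q (m - k))) / fact m"
      unfolding exp1_egf egf_def
      using egf_mult_nth[of "\<lambda>n. if n = 0 then 0 else p ^ n" "\<lambda>n. real (gN q n)" m] by simp
    also have "(\<Sum>k\<le>m. real (m choose k) * (if k = 0 then 0 else p ^ k) * real (gN q (m - k)))
       = (\<Sum>k=1..m. real (m choose k) * p ^ k * real (gN q (m - k)))"
      by (simp add: sum_split0[of _ m])
    finally show ?thesis .
  qed
  have XG: "(fps_X * ?G) $ m = (if m = 0 then 0 else real (gN q (m - 1)) / fact (m - 1))" for m
    by (simp add: egf_def)
  have Hn: "?H $ m = 2 * (?Y $ m) - p * (fps_X * ?G) $ m" for m
    by (simp only: fps_add_nth fps_sub_nth fps_mult_left_const_nth mult_2)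
  consider "n = 0" | "n = 1" | m where "n = Suc (Suc m)"
    by (metis One_nat_def not0_implies_Suc)
  then show "egf (pN q) $ n = (1 + fps_const p * fps_X + fps_X * ?H) $ n"
  proof cases
    case 1
    then show ?thesis using R3(1)[OF q] by (simp add: egf_def)
  next
    case 2
    have "?H $ 0 = 0" using Hn[of 0] Yn[of 0] XG[of 0] by simp
    then show ?thesis using 2 R3(2)[OF q] pq by (simp add: egf_def)
  next
    case 3
    let ?S = "(\<Sum>k=1..Suc m. real (Suc m choose k) * p ^ k * real (gN q (Suc m - k)))"
    have r3: "pN q n + n * ((n - 1) * ((q - 2) * gN q (n - 2))) = 2 * Pf q n"
      by (rule R3(3)[OF q]) (use 3 in simp)
    have PfS: "real (Pf q n) = real n * ?S"
      unfolding Pf_def 3 using pq by (simp add: of_nat_sum mult.assoc) (simp add: algebra_simps)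
    have r3r: "real (pN q n) + real n * (real (n - 1) * (real (q - 2) * real (gN q (n - 2)))) = 2 * real (Pf q n)"
      using arg_cong[OF r3, of real] by (simp only: of_nat_add of_nat_mult of_nat_numeral)
    have r3r': "real (pN q n) + real n * (real (n - 1) * (p * real (gN q (n - 2)))) = 2 * real (Pf q n)"
      using r3r by (simp only: pq)
    have n2: "n - 2 = m" using 3 by simp
    have pn: "real (pN q n) = 2 * (real n * ?S) - real n * (real (n - 1) * (p * real (gN q m)))"
      using r3r' PfS unfolding n2 by linarith
    have rhs: "(1 + fps_const p * fps_X + fps_X * ?H) $ n = 2 * (?S / fact (Suc m)) - p * (real (gN q m) / fact m)"
      using 3 Hn[of "Suc m"] Yn[of "Suc m"] XG[of "Suc m"] by simp
    have e1: "real n = real m + 2" "real (n - 1) = real m + 1" using 3 by auto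
    have f1: "fact n = (real m + 2) * ((real m + 1) * (fact m :: real))" using 3 by (simp add: algebra_simps)
    have f2: "fact (Suc m) = (real m + 1) * (fact m :: real)" by (simp add: algebra_simps)
    have "egf (pN q) $ n = real (pN q n) / fact n" by (simp add: egf_def)
    also have "\<dots> = (2 * ((real m + 2) * ?S) - (real m + 2) * ((real m + 1) * (p * real (gN q m))))
        / ((real m + 2) * ((real m + 1) * fact m))"
      unfolding pn e1 f1 by (rule refl)
    also have "\<dots> = 2 * (?S / ((real m + 1) * fact m)) - p * (real (gN q m) / fact m)"
      by (rule alg_lemma) simp_all
    also have "\<dots> = 2 * (?S / fact (Suc m)) - p * (real (gN q m) / fact m)"
      unfolding f2 by (rule refl)
    finally show ?thesis using rhs by simp
  qed
qed


lemma B_eq: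
  assumes q: "q \<ge> 2"
  shows "B n q = gN q n"
proof -
  have "{M. strong_lonesum q n n M \<and> (\<forall>i j. M i j = M j i)} = SN q {..<n}"
  proof (intro equalityI subsetI)
    fix M assume M: "M \<in> {M. strong_lonesum q n n M \<and> (\<forall>i j. M i j = M j i)}"
    then have qa: "qary_matrix q n n M" and sym: "\<forall>i j. M i j = M j i"
      and sl: "strong_lonesum q n n M" by (auto simp: strong_lonesum_def)
    have "qs q {..<n} M" using qa sym unfolding qary_matrix_def qs_def by auto
    moreover have "NC q {..<n} M" using lonesum_iff_NC[OF q qa] sl by simp
    ultimately show "M \<in> SN q {..<n}" by (simp add: SN_def)
  next
    fix M assume M: "M \<in> SN q {..<n}"
    then have qM: "qs q {..<n} M" and nc: "NC q {..<n} M" by (auto simp: SN_def)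
    have qa: "qary_matrix q n n M" using qM unfolding qary_matrix_def qs_def by auto
    have sym: "\<forall>i j. M i j = M j i" using qs_sym[OF qM] by blast
    show "M \<in> {M. strong_lonesum q n n M \<and> (\<forall>i j. M i j = M j i)}"
      using lonesum_iff_NC[OF q qa] nc sym by simp
  qed
  then show ?thesis by (simp add: B_def gN_def)
qed

lemma Fq_X:
  fixes q :: nat
  shows "Fq q fps_X fps_X = 1 - fps_exp 1 - fps_exp 1
     + (1 - fps_X - fps_X - fps_const (real q - 2) * fps_X * fps_X + fps_X * fps_exp (real q - 2)
        + fps_X * fps_exp (real q - 2)) * (fps_exp 1 * fps_exp 1)"
proof -
  have c: "(of_nat q - 2 :: real fps) = fps_const (real q - 2)"
    by (simp add: fps_eq_iff fps_numeral_nth)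
  have x2: "(fps_X + fps_X :: real fps) = fps_const 2 * fps_X"
    by (simp add: fps_eq_iff fps_numeral_nth)
  have e2: "fps_exp (1::real) oo (fps_X + fps_X) = fps_exp 1 * fps_exp 1"
    unfolding x2 fps_exp_compose_linear using fps_exp_add_mult[of "1::real" 1] by simp
  show ?thesis unfolding Fq_def e2 c by simp
qed

lemma key_identity:
  assumes q: "q \<ge> 2"
  shows "egf (gN q) * (1 - Fq q fps_X fps_X) = (1 + (of_nat q - 2) * fps_X) * fps_exp 2"
proof -
  define G where "G = egf (gN q)"
  define N where "N = egf (nN q)"
  define P where "P = egf (pN q)"
  define E where "E = fps_exp (1::real)"
  define Ep where "Ep = fps_exp (real q - 2)"
  define c where "c = fps_const (real q - 2)"
  define X where "X = (fps_X :: real fps)"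
  have a: "G = E * N" using Eq1[OF q] by (simp add: G_def E_def N_def)
  have b: "G = P + (E - 1) * N + (E - 1) * N" using Eq2[OF q] by (simp add: G_def E_def N_def P_def)
  have cc: "P = 1 + c * X + X * ((Ep - 1) * G + (Ep - 1) * G - c * (X * G))"
    using Eq3[OF q] by (simp add: G_def P_def Ep_def c_def X_def)
  have F: "Fq q fps_X fps_X = 1 - E - E + (1 - X - X - c * X * X + X * Ep + X * Ep) * (E * E)"
    using Fq_X[of q] by (simp add: E_def Ep_def c_def X_def)
  have c2: "(of_nat q - 2 :: real fps) = c"
    by (simp add: c_def fps_eq_iff fps_numeral_nth)
  have e2: "fps_exp (2::real) = E * E" using fps_exp_add_mult[of "1::real" 1] by (simp add: E_def)
  have EP: "E * P = G * (2 - E)"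
  proof -
    have "E * P = E * (G - (E - 1) * N - (E - 1) * N)" using b by (simp add: algebra_simps)
    also have "\<dots> = E * G - (E - 1) * (E * N) - (E - 1) * (E * N)" by (simp add: algebra_simps)
    also have "\<dots> = G * (2 - E)" unfolding a[symmetric] by (simp add: algebra_simps)
    finally show ?thesis .
  qed
  have "G * (1 - Fq q fps_X fps_X) = E * (G * (2 - E)) + G * (E * E) * X * (2 + c * X - 2 * Ep)"
    unfolding F by (simp add: algebra_simps)
  also have "\<dots> = E * (E * P) + G * (E * E) * X * (2 + c * X - 2 * Ep)" by (simp add: EP)
  also have "\<dots> = (1 + c * X) * (E * E)"
    unfolding cc by (simp add: algebra_simps)
  finally show ?thesis unfolding G_def c2 e2 X_def .
qed

theorem mainTheorem8:
  fixes q :: nat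
  assumes "q \<ge> 2"
  shows "Abs_fps (\<lambda>n. of_nat (B n q) / fact n) =
    ((1 + (of_nat q - 2) * fps_X) * fps_exp 2) / (1 - Fq q fps_X fps_X)"
proof -
  have G: "Abs_fps (\<lambda>n. of_nat (B n q) / fact n) = egf (gN q)"
    using B_eq[OF assms] by (simp add: egf_def)
  have K: "egf (gN q) * (1 - Fq q fps_X fps_X) = (1 + (of_nat q - 2) * fps_X) * fps_exp 2"
    using key_identity[OF assms] .
  have n0: "((1 + (of_nat q - 2) * fps_X) * fps_exp (2::real)) $ 0 = 1" by simp
  have "(1 - Fq q fps_X fps_X) \<noteq> 0"
  proof
    assume "1 - Fq q fps_X fps_X = 0"
    then have "(1 + (of_nat q - 2) * fps_X) * fps_exp (2::real) = 0" using K by simp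
    then show False using n0 by simp
  qed
  then have "(egf (gN q) * (1 - Fq q fps_X fps_X)) / (1 - Fq q fps_X fps_X) = egf (gN q)"
    by (rule fps_divide_times_eq)
  then show ?thesis using G K by simp
qed

end
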